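(* The output $x_T$ of Algorithm 1 satisfies $\mathbb{E}[f_\mu(x_T)]\le -(1-5\epsilon)\,\mathrm{OPT}$, where the expectation is over the random choices $t_0,\dots,t_{T-1}$.
   Context: Standing setup: $A\in\mathbb{R}^{m\times n}_{\ge 0}$ has no zero column and is normalized so that $\min_{i\in[n]}\|A_{:i}\|_\infty=1$, where $A_{:i}$ denotes the $i$-th column. The packing LP is $\max\{\mathbf 1^Tx: x\ge 0,\ Ax\le \mathbf 1\}$ with optimal value $\mathrm{OPT}$. $\epsilon\in(0,1/2]$. $\log$ is the natural logarithm unless written $\log_2$. $\mu=\frac{\epsilon}{4\log(nm/\epsilon)}$, $p_j(x)=\exp\big(\frac{1}{\mu}((Ax)_j-1)\big)$ for $j\in[m]$, and $f_\mu(x)=-\mathbf 1^Tx+\mu\sum_{j=1}^m p_j(x)$ for $x\ge 0$; its gradient is $\nabla_i f_\mu(x)=-1+\sum_j A_{ji}p_j(x)\ge -1$. Algorithm 1: set $\alpha=\mu/20$, $w=\lceil\log_2(1/\epsilon)\rceil$, $T=\lceil 10w\log(2n)/(\alpha\epsilon)\rceil$, and $x_0[i]=\frac{1-\epsilon/2}{n\|A_{:i}\|_\infty}$ for $i\in[n]$. For $k=0,\dots,T-1$: choose $t_k\in\{0,\dots,w-1\}$ uniformly at random, independently of the past; writing $g_i=\nabla_i f_\mu(x_k)$, define $\xi_k[i]=0$ if $|g_i|\le\epsilon$, $\xi_k[i]=g_i$ if $\epsilon<|g_i|\le 1$, $\xi_k[i]=1$ if $g_i>1$; for $t\in\{0,\dots,w-1\}$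 define $\xi^{(t)}_k[i]=\xi_k[i]$ if $\epsilon2^t<|\xi_k[i]|\le\epsilon2^{t+1}$ and $\xi^{(t)}_k[i]=0$ otherwise; set $x^{(t)}_{k+1}[i]=x_k[i]\exp(-\alpha\,\xi^{(t)}_k[i])$ and $x_{k+1}=x^{(t_k)}_{k+1}$. Output $x_T$. *)

theory Defs
  imports "HOL-Analysis.Analysis" "HOL-Library.FuncSet"
begin

text \<open>Matrix A is given as a function A j i (row j < m, column i < n); vectors are
  functions nat \<Rightarrow> real, only coordinates i < n matter.\<close>

definition matvec :: "nat \<Rightarrow> (nat \<Rightarrow> nat \<Rightarrow> real) \<Rightarrow> (nat \<Rightarrow> real) \<Rightarrow> nat \<Rightarrow> real" where
  "matvec n A x j = (\<Sum>i<n. A j i * x i)"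

definition colnorm :: "nat \<Rightarrow> (nat \<Rightarrow> nat \<Rightarrow> real) \<Rightarrow> nat \<Rightarrow> real" where
  "colnorm m A i = Max ((\<lambda>j. \<bar>A j i\<bar>) ` {..<m})"

definition packing_feasible :: "nat \<Rightarrow> nat \<Rightarrow> (nat \<Rightarrow> nat \<Rightarrow> real) \<Rightarrow> (nat \<Rightarrow> real) \<Rightarrow> bool" where
  "packing_feasible m n A x \<longleftrightarrow> (\<forall>i<n. 0 \<le> x i) \<and> (\<forall>j<m. matvec n A x j \<le> 1)"

definition OPT :: "nat \<Rightarrow> nat \<Rightarrow> (nat \<Rightarrow> nat \<Rightarrow> real) \<Rightarrow> real" where
  "OPT m n A = Sup {(\<Sum>i<n. x i) | x. packing_feasible m n A x}"

definition mu_param :: "nat \<Rightarrow> nat \<Rightarrow> real \<Rightarrow> real" where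
  "mu_param m n \<epsilon> = \<epsilon> / (4 * ln (real n * real m / \<epsilon>))"

definition pj :: "nat \<Rightarrow> (nat \<Rightarrow> nat \<Rightarrow> real) \<Rightarrow> real \<Rightarrow> (nat \<Rightarrow> real) \<Rightarrow> nat \<Rightarrow> real" where
  "pj n A \<mu> x j = exp ((matvec n A x j - 1) / \<mu>)"

definition f_mu :: "nat \<Rightarrow> nat \<Rightarrow> (nat \<Rightarrow> nat \<Rightarrow> real) \<Rightarrow> real \<Rightarrow> (nat \<Rightarrow> real) \<Rightarrow> real" where
  "f_mu m n A \<mu> x = - (\<Sum>i<n. x i) + \<mu> * (\<Sum>j<m. pj n A \<mu> x j)"

definition grad_f :: "nat \<Rightarrow> nat \<Rightarrow> (nat \<Rightarrow> nat \<Rightarrow> real) \<Rightarrow> real \<Rightarrow> (nat \<Rightarrow> real) \<Rightarrow> nat \<Rightarrow> real" where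
  "grad_f m n A \<mu> x i = -1 + (\<Sum>j<m. A j i * pj n A \<mu> x j)"

text \<open>Truncated gradient xi_k (note the gradient is always \<ge> -1).\<close>
definition xi_trunc :: "real \<Rightarrow> real \<Rightarrow> real" where
  "xi_trunc \<epsilon> g = (if \<bar>g\<bar> \<le> \<epsilon> then 0 else if g > 1 then 1 else g)"

definition xi_bucket :: "real \<Rightarrow> nat \<Rightarrow> real \<Rightarrow> real" where
  "xi_bucket \<epsilon> t v = (if \<epsilon> * 2 ^ t < \<bar>v\<bar> \<and> \<bar>v\<bar> \<le> \<epsilon> * 2 ^ (t + 1) then v else 0)"

definition alg_w :: "real \<Rightarrow> nat" where
  "alg_w \<epsilon> = nat \<lceil>log 2 (1 / \<epsilon>)\<rceil>"

definition alg_alpha :: "nat \<Rightarrow> nat \<Rightarrow> real \<Rightarrow> real" where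
  "alg_alpha m n \<epsilon> = mu_param m n \<epsilon> / 20"

definition alg_T :: "nat \<Rightarrow> nat \<Rightarrow> real \<Rightarrow> nat" where
  "alg_T m n \<epsilon> = nat \<lceil>10 * real (alg_w \<epsilon>) * ln (2 * real n) / (alg_alpha m n \<epsilon> * \<epsilon>)\<rceil>"

definition alg_x0 :: "nat \<Rightarrow> nat \<Rightarrow> (nat \<Rightarrow> nat \<Rightarrow> real) \<Rightarrow> real \<Rightarrow> nat \<Rightarrow> real" where
  "alg_x0 m n A \<epsilon> i = (1 - \<epsilon> / 2) / (real n * colnorm m A i)"

definition alg_step :: "nat \<Rightarrow> nat \<Rightarrow> (nat \<Rightarrow> nat \<Rightarrow> real) \<Rightarrow> real \<Rightarrow> nat \<Rightarrow> (nat \<Rightarrow> real) \<Rightarrow> nat \<Rightarrow> real" where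
  "alg_step m n A \<epsilon> t x i =
     x i * exp (- alg_alpha m n \<epsilon> *
        xi_bucket \<epsilon> t (xi_trunc \<epsilon> (grad_f m n A (mu_param m n \<epsilon>) x i)))"

fun alg_iter :: "nat \<Rightarrow> nat \<Rightarrow> (nat \<Rightarrow> nat \<Rightarrow> real) \<Rightarrow> real \<Rightarrow> (nat \<Rightarrow> nat) \<Rightarrow> nat \<Rightarrow> nat \<Rightarrow> real" where
  "alg_iter m n A \<epsilon> ts 0 = alg_x0 m n A \<epsilon>"
| "alg_iter m n A \<epsilon> ts (Suc k) = alg_step m n A \<epsilon> (ts k) (alg_iter m n A \<epsilon> ts k)"

text \<open>Expectation over independent uniform t_0..t_{T-1} in {0..w-1}: uniform average over all
  choice sequences.\<close>
definition expected_f_output :: "nat \<Rightarrow> nat \<Rightarrow> (nat \<Rightarrow> nat \<Rightarrow> real) \<Rightarrow> real \<Rightarrow> real" where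
  "expected_f_output m n A \<epsilon> =
     (let T = alg_T m n \<epsilon>; w = alg_w \<epsilon> in
       (\<Sum>ts \<in> {..<T} \<rightarrow>\<^sub>E {..<w}. f_mu m n A (mu_param m n \<epsilon>) (alg_iter m n A \<epsilon> ts T))
       / real w ^ T)"

end

theory Submission
  imports Defs
begin

lemma ln2_ge: "ln 2 \<ge> (0.6::real)"
proof -
  have a: "exp (0.3::real) \<le> 1 + 0.3 + 0.3^2" by (rule exp_bound) auto
  have b: "(1 + 0.3 + 0.3^2::real) = 1.39" by (simp add: power2_eq_square)
  have "exp (0.3::real) * exp 0.3 \<le> 1.39 * 1.39" using a b by (intro mult_mono) auto
  moreover have "exp (0.3::real) * exp 0.3 = exp 0.6" by (simp add: exp_add[symmetric])
  ultimately have "exp (0.6::real) \<le> 2" by simp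
  thus ?thesis by (metis exp_le_cancel_iff exp_ln zero_less_numeral)
qed

lemma exp_neg_upper:
  fixes y :: real assumes "y \<ge> 0" shows "exp (-y) \<le> 1 - y + y^2/2"
proof -
  have e: "1 + y + y^2/2 \<le> exp y" using assms exp_lower_Taylor_quadratic by auto
  have eq: "(1 - y + y^2/2) * (1 + y + y^2/2) = 1 + y^4/4"
    by (simp add: algebra_simps power2_eq_square power4_eq_xxxx)
  have pos: "1 - y + y^2/2 \<ge> 0"
  proof -
    have "(y - 1)^2 \<ge> 0" by simp
    thus ?thesis by (simp add: power2_eq_square algebra_simps)
  qed
  have "(1 - y + y^2/2) * (1 + y + y^2/2) \<ge> 1" unfolding eq by simp
  also have "(1 - y + y^2/2) * (1 + y + y^2/2) \<le> (1 - y + y^2/2) * exp y"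
    using e pos by (rule mult_left_mono)
  finally have "(1 - y + y^2/2) * exp y \<ge> 1" .
  hence "(1 - y + y^2/2) * exp y * exp (-y) \<ge> exp (-y)" by (simp add: mult_right_mono)
  thus ?thesis by (simp add: mult.assoc exp_minus_inverse)
qed

lemma exp_quad_upper:
  fixes d :: real assumes "\<bar>d\<bar> \<le> 1" shows "exp d \<le> 1 + d + d^2"
proof (cases "d \<ge> 0")
  case True thus ?thesis using assms exp_bound[of d] by auto
next
  case False
  have "exp (-(-d)) \<le> 1 - (-d) + (-d)^2/2" by (rule exp_neg_upper) (use False in auto)
  hence "exp d \<le> 1 + d + d^2/2" by simp
  moreover have "d^2 \<ge> 0" by simp
  ultimately show ?thesis by linarith
qed

lemma abs_exp_sub1: fixes y :: real shows "\<bar>exp y - 1\<bar> \<le> \<bar>y\<bar> * exp \<bar>y\<bar>"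
proof (cases "y \<ge> 0")
  case True
  have "1 - y \<le> exp (-y)" using exp_ge_add_one_self[of "-y"] by simp
  hence "(1 - y) * exp y \<le> 1" by (simp add: exp_minus field_simps)
  thus ?thesis using True by (simp add: algebra_simps)
next
  case False
  have a: "1 + y \<le> exp y" by simp
  have b: "exp y \<le> 1" using False by simp
  have c: "1 \<le> exp (-y)" using False by simp
  have d: "-y \<le> -y * exp (-y)" using c False by (simp add: mult_le_cancel_left1)
  have "\<bar>exp y - 1\<bar> = 1 - exp y" using b by simp
  hence "\<bar>exp y - 1\<bar> \<le> -y * exp (-y)" using a d by linarith
  thus ?thesis using False by simp
qed



locale pk =
  fixes m n :: nat and A :: "nat \<Rightarrow> nat \<Rightarrow> real" and \<epsilon> :: real
  assumes n_pos: "0 < n"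
    and A_nn: "\<And>j i. j < m \<Longrightarrow> i < n \<Longrightarrow> 0 \<le> A j i"
    and A_col: "\<And>i. i < n \<Longrightarrow> \<exists>j<m. A j i \<noteq> 0"
    and minc: "Min (colnorm m A ` {..<n}) = 1"
    and eps_pos: "0 < \<epsilon>" and eps_le: "\<epsilon> \<le> 1 / 2"
begin

abbreviation "mu \<equiv> mu_param m n \<epsilon>"
abbreviation "al \<equiv> alg_alpha m n \<epsilon>"
abbreviation "w \<equiv> alg_w \<epsilon>"
abbreviation "TT \<equiv> alg_T m n \<epsilon>"
abbreviation "LL \<equiv> ln (real n * real m / \<epsilon>)"
abbreviation "cc i \<equiv> colnorm m A i"

lemma m_pos: "0 < m"
  using A_col[OF n_pos] by auto

lemma c_ge1: "i < n \<Longrightarrow> 1 \<le> cc i"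
  using Min_le[of "colnorm m A ` {..<n}" "cc i"] minc by auto

lemma A_le_c: "j < m \<Longrightarrow> i < n \<Longrightarrow> A j i \<le> cc i"
  unfolding colnorm_def
  by (rule order_trans[OF abs_ge_self]) (rule Max_ge, auto)

lemma c_att: assumes "i < n" shows "\<exists>j<m. A j i = cc i"
proof -
  have "Max ((\<lambda>j. \<bar>A j i\<bar>) ` {..<m}) \<in> (\<lambda>j. \<bar>A j i\<bar>) ` {..<m}"
    by (rule Max_in) (use m_pos in auto)
  then obtain j where j: "j < m" "\<bar>A j i\<bar> = cc i" unfolding colnorm_def by auto
  thus ?thesis using A_nn[OF j(1) assms] by auto
qed

lemma i0_ex: "\<exists>i<n. cc i = 1"
proof -
  have "Min (colnorm m A ` {..<n}) \<in> colnorm m A ` {..<n}"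
    by (rule Min_in) (use n_pos in auto)
  thus ?thesis using minc by auto
qed

lemma q_ge: "real n * real m / \<epsilon> \<ge> 2 * real n"
proof -
  have "real m \<ge> 1" using m_pos by simp
  have "1 / \<epsilon> \<ge> 2" using eps_pos eps_le by (simp add: field_simps)
  have "real n * real m / \<epsilon> = real n * real m * (1/\<epsilon>)" by simp
  also have "\<dots> \<ge> real n * 1 * 2"
    by (intro mult_mono) (use \<open>real m \<ge> 1\<close> \<open>1/\<epsilon> \<ge> 2\<close> in auto)
  finally show ?thesis by simp
qed

lemma q_pos: "real n * real m / \<epsilon> > 0"
proof -
  have "2 * real n > 0" using n_pos by simp
  thus ?thesis using q_ge by linarith
qed

lemma LL_ge: "LL \<ge> 0.6"
proof -
  have "real n \<ge> 1" using n_pos by simp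
  hence "2 \<le> real n * real m / \<epsilon>" using q_ge by linarith
  hence "ln 2 \<le> LL" by (subst ln_le_cancel_iff) auto
  thus ?thesis using ln2_ge by simp
qed

lemma mu_eq: "mu = \<epsilon> / (4 * LL)" unfolding mu_param_def ..

lemma mu_pos: "0 < mu" using LL_ge eps_pos mu_eq by simp

lemma mu_le_eps: "mu \<le> \<epsilon> / 2.4"
proof -
  have "4 * LL \<ge> 2.4" using LL_ge by simp
  thus ?thesis unfolding mu_eq using eps_pos by (intro divide_left_mono) auto
qed

lemma mu_le: "mu \<le> 0.21" using mu_le_eps eps_le by simp

lemma al_eq: "al = mu / 20" unfolding alg_alpha_def ..
lemma al_pos: "0 < al" using al_eq mu_pos by simp
lemma al_le: "al \<le> 0.011" using al_eq mu_le by simp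

lemma exp_al: "exp al \<le> 1.1"
proof -
  have "exp al \<le> 1 + al + al^2" by (rule exp_bound) (use al_pos al_le in auto)
  moreover have "al^2 \<le> 0.011 * 0.011" unfolding power2_eq_square
    using al_pos al_le by (intro mult_mono) auto
  ultimately show ?thesis using al_le by simp
qed

lemma w_props: "1 \<le> w" "1 \<le> \<epsilon> * 2 ^ w"
proof -
  have l: "log 2 (1/\<epsilon>) \<ge> 1"
  proof -
    have "1 / \<epsilon> \<ge> 2" using eps_pos eps_le by (simp add: field_simps)
    thus ?thesis using eps_pos by (subst le_log_iff) auto
  qed
  have wr: "real w \<ge> log 2 (1/\<epsilon>)" unfolding alg_w_def using l by linarith
  thus "1 \<le> w" using l by linarith
  have "2 powr (log 2 (1/\<epsilon>)) \<le> 2 powr (real w)" by (rule powr_mono) (use wr in auto)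
  hence "1/\<epsilon> \<le> 2 ^ w" using eps_pos by (simp add: powr_realpow)
  thus "1 \<le> \<epsilon> * 2 ^ w" using eps_pos by (simp add: field_simps)
qed

lemma K_ge: "real TT * al / real w \<ge> 10 * ln (2 * real n) / \<epsilon>"
proof -
  have wpos: "real w > 0" using w_props by simp
  have ln0: "ln (2 * real n) \<ge> 0" using n_pos by simp
  have X0: "10 * real w * ln (2 * real n) / (al * \<epsilon>) \<ge> 0"
    using wpos ln0 al_pos eps_pos by simp
  have "real TT \<ge> 10 * real w * ln (2 * real n) / (al * \<epsilon>)"
    unfolding alg_T_def using X0 by linarith
  hence "real TT * al / real w \<ge> (10 * real w * ln (2 * real n) / (al * \<epsilon>)) * al / real w"
    using al_pos wpos by (intro divide_right_mono mult_right_mono) auto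
  also have "(10 * real w * ln (2 * real n) / (al * \<epsilon>)) * al / real w = 10 * ln (2 * real n) / \<epsilon>"
    using al_pos wpos eps_pos by (simp add: field_simps)
  finally show ?thesis .
qed

end

context pk begin

lemma LL_pos: "LL > 0" using LL_ge by simp

lemma inv_mu: "1 / mu = 4 * LL / \<epsilon>"
  unfolding mu_eq by simp

lemma half_inv_mu: "1 / mu / 2 = 2 * LL / \<epsilon>"
  unfolding inv_mu by simp

lemma eps_2mu: "\<epsilon> / (2 * mu) = 2 * LL"
proof -
  have "\<epsilon> / (2 * mu) = \<epsilon> * (1 / mu) / 2" by simp
  also have "\<dots> = \<epsilon> * (4 * LL / \<epsilon>) / 2" unfolding inv_mu ..
  also have "\<dots> = 2 * LL" using eps_pos by simp
  finally show ?thesis .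
qed

lemma exp_inv_mu: "exp (1 / mu) \<ge> (2 * real n + 1) / mu"
proof -
  define y where "y = 1 / mu"
  have y0: "y \<ge> 0" using mu_pos y_def by simp
  have e1: "exp (y/2) \<ge> y"
  proof -
    have "1 + y/2 + (y/2)^2/2 \<le> exp (y/2)" by (rule exp_lower_Taylor_quadratic) (use y0 in auto)
    moreover have "1 + y/2 + (y/2)^2/2 \<ge> y"
    proof -
      have "(y - 2)^2 \<ge> 0" by simp
      thus ?thesis by (simp add: power2_eq_square algebra_simps)
    qed
    ultimately show ?thesis by linarith
  qed
  have yeq: "y / 2 = 2 * LL / \<epsilon>" unfolding y_def by (rule half_inv_mu)
  have ie: "1 / \<epsilon> \<ge> 1" using eps_pos eps_le by (simp add: field_simps)
  have "2 * LL * (1 / \<epsilon>) \<ge> 2 * LL * 1" using LL_pos ie by (intro mult_left_mono) auto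
  hence "2 * LL / \<epsilon> \<ge> 2 * LL" by simp
  hence "exp (y/2) \<ge> exp (2 * LL)" unfolding yeq by simp
  also have "exp (2 * LL) = exp LL * exp LL" by (simp only: mult_2 exp_add)
  also have "\<dots> = (real n * real m / \<epsilon>) * (real n * real m / \<epsilon>)" by (simp only: exp_ln[OF q_pos])
  also have "\<dots> \<ge> (2 * real n) * (2 * real n)" using q_ge n_pos by (intro mult_mono) auto
  finally have e2: "exp (y/2) \<ge> (2 * real n) * (2 * real n)" .
  have n1: "real n \<ge> 1" using n_pos by simp
  hence "real n * real n \<ge> real n * 1" by (intro mult_left_mono) auto
  moreover have "(2 * real n) * (2 * real n) = 4 * (real n * real n)" by simp
  ultimately have "(2 * real n) * (2 * real n) \<ge> 2 * real n + 1" using n1 by linarith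
  hence e3: "exp (y/2) \<ge> 2 * real n + 1" using e2 by linarith
  have "exp y = exp (y/2) * exp (y/2)" by (simp only: exp_add[symmetric] field_sum_of_halves)
  also have "\<dots> \<ge> (2 * real n + 1) * y" using e1 e3 y0 by (intro mult_mono) auto
  finally show ?thesis unfolding y_def by simp
qed

lemma small_p: "real m * exp (- (\<epsilon> / (2 * mu))) * mu \<le> mu * \<epsilon>"
proof -
  have "exp (- (\<epsilon> / (2 * mu))) \<le> exp (- LL)" unfolding eps_2mu using LL_pos by simp
  also have "exp (- LL) = \<epsilon> / (real n * real m)" using q_pos eps_pos by (simp add: exp_minus)
  finally have e1: "exp (- (\<epsilon> / (2 * mu))) \<le> \<epsilon> / (real n * real m)" .
  have "real m * exp (- (\<epsilon> / (2 * mu))) \<le> real m * (\<epsilon> / (real n * real m))"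
    using e1 by (intro mult_left_mono) auto
  also have "\<dots> = \<epsilon> / real n" using m_pos by simp
  also have "\<dots> \<le> \<epsilon> / 1" using n_pos eps_pos by (intro divide_left_mono) auto
  finally have h0: "real m * exp (- (\<epsilon> / (2 * mu))) \<le> \<epsilon>" by simp
  have "real m * exp (- (\<epsilon> / (2 * mu))) * mu \<le> \<epsilon> * mu"
    by (rule mult_right_mono[OF h0]) (use mu_pos in simp)
  thus ?thesis by (simp add: mult.commute)
qed

end


lemma count_bucket:
  fixes r :: real
  assumes "1 < r" "r \<le> 2 ^ N"
  shows "(\<Sum>t<N. if 2 ^ t < r \<and> r \<le> 2 ^ Suc t then 1 else 0) = (1::real)"
  using assms(2)
proof (induction N)
  case 0 thus ?case using assms(1) by simp
next
  case (Suc N)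
  show ?case
  proof (cases "r \<le> 2 ^ N")
    case True
    hence "\<not> (2 ^ N < r)" by simp
    thus ?thesis using Suc.IH[OF True] by simp
  next
    case False
    hence gt: "2 ^ N < r" by simp
    have "\<And>t. t < N \<Longrightarrow> \<not> (r \<le> 2 ^ Suc t)"
    proof -
      fix t :: nat assume "t < N"
      hence "Suc t \<le> N" by simp
      hence "(2::real) ^ Suc t \<le> 2 ^ N" by (intro power_increasing) auto
      thus "\<not> (r \<le> 2 ^ Suc t)" using gt by simp
    qed
    hence "(\<Sum>t<N. if 2 ^ t < r \<and> r \<le> 2 ^ Suc t then 1 else 0) = (0::real)"
      by (intro sum.neutral) auto
    thus ?thesis using gt Suc.prems by simp
  qed
qed

lemma xi_props:
  fixes \<epsilon> g :: real
  assumes e: "0 < \<epsilon>" "\<epsilon> \<le> 1/2" and g: "-1 \<le> g"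
  defines "\<xi> \<equiv> xi_trunc \<epsilon> g"
  shows "\<bar>\<xi>\<bar> \<le> 1" "\<xi> = 0 \<or> (\<epsilon> < \<bar>\<xi>\<bar> \<and> \<bar>\<xi>\<bar> \<le> 1)"
    "0 \<le> \<xi> * g" "\<xi>^2 \<le> \<xi> * g" "\<xi>^2 * (1 + g) \<le> 2 * (\<xi> * g)"
    "0 < \<xi> \<Longrightarrow> 0 < g" "\<xi> < 0 \<Longrightarrow> g < 0"
proof -
  consider (z) "\<bar>g\<bar> \<le> \<epsilon>" | (big) "\<not> \<bar>g\<bar> \<le> \<epsilon>" "g > 1" | (mid) "\<not> \<bar>g\<bar> \<le> \<epsilon>" "\<not> g > 1" by blast
  note cs = this
  show "\<bar>\<xi>\<bar> \<le> 1" using cs e g unfolding \<xi>_def xi_trunc_def by cases auto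
  show "\<xi> = 0 \<or> (\<epsilon> < \<bar>\<xi>\<bar> \<and> \<bar>\<xi>\<bar> \<le> 1)" using cs e g unfolding \<xi>_def xi_trunc_def by cases auto
  show "0 \<le> \<xi> * g" using cs e g unfolding \<xi>_def xi_trunc_def by cases auto
  show "\<xi>^2 \<le> \<xi> * g" using cs e g unfolding \<xi>_def xi_trunc_def by cases (auto simp: power2_eq_square)
  show "\<xi>^2 * (1 + g) \<le> 2 * (\<xi> * g)" using cs
  proof cases
    case z thus ?thesis unfolding \<xi>_def xi_trunc_def by simp
  next
    case big thus ?thesis unfolding \<xi>_def xi_trunc_def by simp
  next
    case mid
    hence "\<xi> = g" unfolding \<xi>_def xi_trunc_def by simp
    moreover have "g^2 * (1 + g) \<le> g^2 * 2" using mid by (intro mult_left_mono) auto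
    ultimately show ?thesis by (simp add: power2_eq_square)
  qed
  show "0 < \<xi> \<Longrightarrow> 0 < g" using cs e g unfolding \<xi>_def xi_trunc_def by cases auto
  show "\<xi> < 0 \<Longrightarrow> g < 0" using cs e g unfolding \<xi>_def xi_trunc_def by cases auto
qed

lemma xi_mirror:
  fixes \<epsilon> g x u :: real
  assumes e: "0 < \<epsilon>" "\<epsilon> \<le> 1/2" and g: "-1 \<le> g" and xu: "0 \<le> x" "0 \<le> u"
  shows "(u - x) * xi_trunc \<epsilon> g \<le> (u - x) * g + \<epsilon> * (x + u) + x * (xi_trunc \<epsilon> g * g)"
proof -
  consider (z) "\<bar>g\<bar> \<le> \<epsilon>" | (big) "\<not> \<bar>g\<bar> \<le> \<epsilon>" "g > 1" | (mid) "\<not> \<bar>g\<bar> \<le> \<epsilon>" "\<not> g > 1" by blast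
  thus ?thesis
  proof cases
    case z
    have "u * (-\<epsilon>) \<le> u * g" using z xu by (intro mult_left_mono) auto
    moreover have "x * g \<le> x * \<epsilon>" using z xu by (intro mult_left_mono) auto
    ultimately show ?thesis using z unfolding xi_trunc_def by (simp add: algebra_simps)
  next
    case big
    have "u * 1 \<le> u * g" using big xu by (intro mult_left_mono) auto
    moreover have "0 \<le> \<epsilon> * (x + u)" using e xu by simp
    ultimately show ?thesis using big xu unfolding xi_trunc_def by (simp add: algebra_simps)
  next
    case mid
    have "0 \<le> x * (g * g)" using xu by simp
    moreover have "0 \<le> \<epsilon> * (x + u)" using e xu by simp
    ultimately show ?thesis using mid unfolding xi_trunc_def by (simp add: algebra_simps)
  qed
qed

lemma bucket_cases:
  "xi_bucket \<epsilon> t v = 0 \<or> (xi_bucket \<epsilon> t v = v \<and> \<epsilon> * 2 ^ t < \<bar>v\<bar> \<and> \<bar>v\<bar> \<le> \<epsilon> * 2 ^ (t + 1))"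
  unfolding xi_bucket_def by auto

lemma bucket_sum:
  fixes F :: "real \<Rightarrow> real" and \<epsilon> v :: real
  assumes F0: "F 0 = 0" and e: "0 < \<epsilon>" and ew: "1 \<le> \<epsilon> * 2 ^ N"
    and v: "v = 0 \<or> (\<epsilon> < \<bar>v\<bar> \<and> \<bar>v\<bar> \<le> 1)"
  shows "(\<Sum>t<N. F (xi_bucket \<epsilon> t v)) = F v"
proof (cases "v = 0")
  case True
  have "\<And>t. xi_bucket \<epsilon> t 0 = 0" unfolding xi_bucket_def by simp
  thus ?thesis unfolding True using F0 by simp
next
  case False
  hence v2: "\<epsilon> < \<bar>v\<bar>" "\<bar>v\<bar> \<le> 1" using v by auto
  define r where "r = \<bar>v\<bar> / \<epsilon>"
  have r1: "1 < r" using v2 e unfolding r_def by (simp add: field_simps)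
  have r2: "r \<le> 2 ^ N" using v2 e ew unfolding r_def by (simp add: field_simps)
  have eq: "\<And>t. (\<epsilon> * 2 ^ t < \<bar>v\<bar> \<and> \<bar>v\<bar> \<le> \<epsilon> * 2 ^ (t + 1)) = (2 ^ t < r \<and> r \<le> 2 ^ Suc t)"
    unfolding r_def using e by (simp add: field_simps)
  have "(\<Sum>t<N. F (xi_bucket \<epsilon> t v)) = (\<Sum>t<N. F v * (if 2 ^ t < r \<and> r \<le> 2 ^ Suc t then 1 else 0))"
  proof (rule sum.cong)
    fix t assume "t \<in> {..<N}"
    have bk: "xi_bucket \<epsilon> t v = (if 2 ^ t < r \<and> r \<le> 2 ^ Suc t then v else 0)"
      by (simp only: xi_bucket_def eq)
    show "F (xi_bucket \<epsilon> t v) = F v * (if 2 ^ t < r \<and> r \<le> 2 ^ Suc t then 1 else 0)"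
      unfolding bk using F0 by simp
  qed simp
  also have "\<dots> = F v * (\<Sum>t<N. if 2 ^ t < r \<and> r \<le> 2 ^ Suc t then 1 else 0)"
    by (simp add: sum_distrib_left)
  also have "\<dots> = F v" using count_bucket[OF r1 r2] by simp
  finally show ?thesis .
qed


context pk begin

abbreviation "ff x \<equiv> f_mu m n A mu x"
abbreviation "gr x i \<equiv> grad_f m n A mu x i"
abbreviation "pp x j \<equiv> pj n A mu x j"
abbreviation "Ax x j \<equiv> matvec n A x j"
abbreviation "xi x i \<equiv> xi_trunc \<epsilon> (gr x i)"
abbreviation "vb t x i \<equiv> xi_bucket \<epsilon> t (xi x i)"
abbreviation "stp t x \<equiv> alg_step m n A \<epsilon> t x"
abbreviation "x0 \<equiv> alg_x0 m n A \<epsilon>"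

definition Inv :: "(nat \<Rightarrow> real) \<Rightarrow> bool" where
  "Inv x \<longleftrightarrow> (\<forall>i<n. 0 < x i \<and> cc i * x i \<le> 2) \<and> ff x \<le> 1/8"

lemma pp_pos: "0 < pp x j" unfolding pj_def by simp

lemma gr_ge: assumes "i < n" shows "-1 \<le> gr x i"
proof -
  have "0 \<le> (\<Sum>j<m. A j i * pp x j)"
    by (intro sum_nonneg mult_nonneg_nonneg) (use A_nn assms pp_pos in \<open>auto intro: less_imp_le\<close>)
  thus ?thesis unfolding grad_f_def by simp
qed

lemma sum_Ap: "i < n \<Longrightarrow> (\<Sum>j<m. A j i * pp x j) = 1 + gr x i"
  unfolding grad_f_def by simp

lemma ff_eq: "ff x = - (\<Sum>i<n. x i) + mu * (\<Sum>j<m. pp x j)"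
  unfolding f_mu_def ..

lemma Ax_nn: "(\<And>i. i < n \<Longrightarrow> 0 \<le> x i) \<Longrightarrow> j < m \<Longrightarrow> 0 \<le> Ax x j"
  unfolding matvec_def using A_nn by (auto intro!: sum_nonneg)

lemma Ax_ge_term: "(\<And>i. i < n \<Longrightarrow> 0 \<le> x i) \<Longrightarrow> j < m \<Longrightarrow> i < n \<Longrightarrow> A j i * x i \<le> Ax x j"
  unfolding matvec_def using A_nn by (intro member_le_sum) auto

lemma small_sum_p:
  assumes "\<And>j. j < m \<Longrightarrow> Ax z j \<le> 1 - \<epsilon> / 2"
  shows "mu * (\<Sum>j<m. pp z j) \<le> mu * \<epsilon>"
proof -
  have "\<And>j. j < m \<Longrightarrow> pp z j \<le> exp (- (\<epsilon> / (2 * mu)))"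
  proof -
    fix j assume j: "j < m"
    have "(Ax z j - 1) / mu \<le> (- \<epsilon> / 2) / mu"
      using assms[OF j] mu_pos by (intro divide_right_mono) auto
    also have "\<dots> = - (\<epsilon> / (2 * mu))" by simp
    finally show "pp z j \<le> exp (- (\<epsilon> / (2 * mu)))" unfolding pj_def by simp
  qed
  hence "(\<Sum>j<m. pp z j) \<le> (\<Sum>j<m. exp (- (\<epsilon> / (2 * mu))))" by (intro sum_mono) auto
  hence "mu * (\<Sum>j<m. pp z j) \<le> mu * (real m * exp (- (\<epsilon> / (2 * mu))))"
    using mu_pos by (intro mult_left_mono) auto
  thus ?thesis using small_p by (simp add: algebra_simps)
qed

lemma mueps: "mu * \<epsilon> \<le> 1/8"
proof -
  have "mu * \<epsilon> \<le> 0.21 * 0.5" using mu_le eps_le mu_pos eps_pos by (intro mult_mono) auto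
  thus ?thesis by simp
qed

lemma x0_props:
  assumes "i < n"
  shows "0 < x0 i" "cc i * x0 i \<le> 1" "x0 i \<le> 1 / real n"
proof -
  have c1: "cc i \<ge> 1" using c_ge1[OF assms] .
  have e: "0 < 1 - \<epsilon>/2" "1 - \<epsilon>/2 \<le> 1" using eps_pos eps_le by auto
  show "0 < x0 i" unfolding alg_x0_def using c1 e n_pos by simp
  have "cc i * x0 i = (1 - \<epsilon>/2) / real n" unfolding alg_x0_def using c1 by simp
  also have "\<dots> \<le> 1 / real n" using e n_pos by (intro divide_right_mono) auto
  also have "\<dots> \<le> 1" using n_pos by simp
  finally show "cc i * x0 i \<le> 1" .
  have "x0 i = (1 - \<epsilon>/2) / (real n * cc i)" unfolding alg_x0_def ..
  also have "\<dots> \<le> 1 / (real n * 1)" using e n_pos c1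
    by (intro frac_le mult_left_mono) auto
  finally show "x0 i \<le> 1 / real n" by simp
qed

lemma x0_Ax: "j < m \<Longrightarrow> Ax x0 j \<le> 1 - \<epsilon> / 2"
proof -
  assume j: "j < m"
  have "Ax x0 j = (\<Sum>i<n. A j i * x0 i)" unfolding matvec_def ..
  also have "\<dots> \<le> (\<Sum>i<n. (1 - \<epsilon>/2) / real n)"
  proof (rule sum_mono)
    fix i assume i: "i \<in> {..<n}"
    have c1: "cc i \<ge> 1" using c_ge1 i by simp
    have "A j i * x0 i \<le> cc i * x0 i"
      using A_le_c[OF j] i x0_props(1)[of i] by (intro mult_right_mono) auto
    also have "\<dots> = (1 - \<epsilon>/2) / real n" unfolding alg_x0_def using c1 by simp
    finally show "A j i * x0 i \<le> (1 - \<epsilon>/2) / real n" .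
  qed
  also have "\<dots> = 1 - \<epsilon>/2" using n_pos by simp
  finally show ?thesis .
qed

lemma x0_f: "ff x0 \<le> mu * \<epsilon>"
proof -
  have "(\<Sum>i<n. x0 i) \<ge> 0" using x0_props(1) by (intro sum_nonneg) (auto intro: less_imp_le)
  thus ?thesis unfolding ff_eq using small_sum_p[OF x0_Ax] by simp
qed

lemma x0_sum: "(\<Sum>i<n. x0 i) \<le> 1"
proof -
  have "(\<Sum>i<n. x0 i) \<le> (\<Sum>i<n. 1 / real n)" by (intro sum_mono) (use x0_props(3) in auto)
  thus ?thesis using n_pos by simp
qed

lemma Inv_x0: "Inv x0"
  unfolding Inv_def using x0_props x0_f mueps by force

lemma Inv_sum: assumes "Inv x" shows "(\<Sum>i<n. x i) \<le> 2 * real n"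
proof -
  have "(\<Sum>i<n. x i) \<le> (\<Sum>i<n. 2)"
  proof (rule sum_mono)
    fix i assume i: "i \<in> {..<n}"
    have "1 * x i \<le> cc i * x i" using assms c_ge1 i unfolding Inv_def by (intro mult_right_mono) auto
    moreover have "cc i * x i \<le> 2" using assms i unfolding Inv_def by auto
    ultimately show "x i \<le> 2" by simp
  qed
  thus ?thesis by simp
qed

lemma Inv_Ax: assumes "Inv x" "j < m" shows "Ax x j \<le> 2"
proof -
  have xs: "(\<Sum>i<n. x i) \<le> 2 * real n" by (rule Inv_sum[OF assms(1)])
  have "pp x j \<le> (\<Sum>j<m. pp x j)" using assms(2) pp_pos by (intro member_le_sum) (auto intro: less_imp_le)
  hence "mu * pp x j \<le> mu * (\<Sum>j<m. pp x j)" using mu_pos by simp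
  also have "\<dots> = ff x + (\<Sum>i<n. x i)" unfolding ff_eq by simp
  also have "\<dots> \<le> 2 * real n + 1" using assms(1) xs unfolding Inv_def by simp
  finally have "pp x j \<le> (2 * real n + 1) / mu" using mu_pos by (simp add: field_simps)
  also have "\<dots> \<le> exp (1 / mu)" by (rule exp_inv_mu)
  finally have "(Ax x j - 1) / mu \<le> 1 / mu" unfolding pj_def by simp
  hence "Ax x j - 1 \<le> 1" using mu_pos by (simp add: divide_le_cancel)
  thus ?thesis by simp
qed

end

context pk begin

lemma v_props:
  fixes t :: nat and x :: "nat \<Rightarrow> real"
  assumes i: "i < n"
  defines "v \<equiv> vb t x i" and "g \<equiv> gr x i" and "M0 \<equiv> min 1 (\<epsilon> * 2 ^ (t + 1))"
  shows "\<bar>v\<bar> \<le> M0" "\<bar>v\<bar> * M0 \<le> 2 * v^2" "0 \<le> v * g" "v^2 * (1 + g) \<le> 2 * (v * g)"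
    "\<bar>v\<bar> \<le> 1" "0 < v \<Longrightarrow> 0 < g" "v < 0 \<Longrightarrow> g < 0"
proof -
  have g1: "-1 \<le> g" unfolding g_def by (rule gr_ge[OF i])
  note X = xi_props[OF eps_pos eps_le g1]
  note B = bucket_cases[of \<epsilon> t "xi_trunc \<epsilon> g"]
  have M0pos: "0 \<le> M0" unfolding M0_def using eps_pos by simp
  show "\<bar>v\<bar> \<le> M0" using B X(1) M0pos unfolding v_def g_def M0_def by auto
  show "\<bar>v\<bar> * M0 \<le> 2 * v^2"
  proof (cases "v = 0")
    case True thus ?thesis by simp
  next
    case False
    hence vv: "v = xi_trunc \<epsilon> g" "\<epsilon> * 2 ^ t < \<bar>v\<bar>" using B unfolding v_def g_def by auto
    have "M0 \<le> \<epsilon> * 2 ^ (t+1)" unfolding M0_def by simp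
    also have "\<dots> = 2 * (\<epsilon> * 2 ^ t)" by simp
    also have "\<dots> \<le> 2 * \<bar>v\<bar>" using vv by simp
    finally have "\<bar>v\<bar> * M0 \<le> \<bar>v\<bar> * (2 * \<bar>v\<bar>)" by (intro mult_left_mono) auto
    thus ?thesis by (simp add: power2_eq_square)
  qed
  show "0 \<le> v * g" using B X(3) unfolding v_def g_def by auto
  show "v^2 * (1 + g) \<le> 2 * (v * g)" using B X(5) unfolding v_def g_def by auto
  show "\<bar>v\<bar> \<le> 1" using B X(1) unfolding v_def g_def by auto
  show "0 < v \<Longrightarrow> 0 < g" using B X(6) unfolding v_def g_def by auto
  show "v < 0 \<Longrightarrow> g < 0" using B X(7) unfolding v_def g_def by auto
qed

lemma d_abs:
  assumes "\<bar>v\<bar> \<le> 1" "0 \<le> xx"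
  shows "\<bar>xx * (exp (- al * v) - 1)\<bar> \<le> 1.1 * al * (xx * \<bar>v\<bar>)"
proof -
  have a: "\<bar>- al * v\<bar> = al * \<bar>v\<bar>" using al_pos by (simp add: abs_mult)
  have b: "al * \<bar>v\<bar> \<le> al" using assms(1) al_pos by (simp add: mult_le_cancel_left1)
  have "\<bar>exp (- al * v) - 1\<bar> \<le> (al * \<bar>v\<bar>) * exp (al * \<bar>v\<bar>)" using abs_exp_sub1[of "- al * v"] a by simp
  also have "\<dots> \<le> (al * \<bar>v\<bar>) * 1.1"
  proof (rule mult_left_mono)
    show "exp (al * \<bar>v\<bar>) \<le> 1.1" using b exp_al by (meson exp_le_cancel_iff order_trans)
  qed (use al_pos in simp)
  finally have "xx * \<bar>exp (- al * v) - 1\<bar> \<le> xx * ((al * \<bar>v\<bar>) * 1.1)" using assms(2) by (intro mult_left_mono)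
  moreover have "\<bar>xx * (exp (- al * v) - 1)\<bar> = xx * \<bar>exp (- al * v) - 1\<bar>" using assms(2) by (simp add: abs_mult)
  ultimately show ?thesis by (simp add: algebra_simps)
qed

lemma dg_bound:
  assumes "0 \<le> xx" "\<bar>v\<bar> \<le> 1" "0 < v \<Longrightarrow> 0 < g" "v < 0 \<Longrightarrow> g < 0" "0 \<le> v * g"
  shows "xx * (exp (- al * v) - 1) * g \<le> - 0.99 * al * (xx * (v * g))"
proof -
  consider "v = 0" | "0 < v" | "v < 0" by linarith
  thus ?thesis
  proof cases
    case 1 thus ?thesis by simp
  next
    case 2
    hence g: "0 < g" using assms(3) by simp
    have av: "0 \<le> al * v" "al * v \<le> al" using 2 al_pos assms(2) by (auto simp: mult_le_cancel_left1)
    have "exp (- (al * v)) \<le> 1 - al * v + (al * v)^2 / 2" by (rule exp_neg_upper) (use av in simp)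
    moreover have "(al * v)^2 / 2 \<le> 0.01 * (al * v)"
    proof -
      have "(al * v)^2 = (al * v) * (al * v)" by (simp add: power2_eq_square)
      also have "\<dots> \<le> (al * v) * 0.011" using av al_le by (intro mult_left_mono) auto
      finally show ?thesis using av by simp
    qed
    ultimately have "exp (- al * v) - 1 \<le> - 0.99 * (al * v)" by simp
    hence "xx * (exp (- al * v) - 1) \<le> xx * (- 0.99 * (al * v))" using assms(1) by (intro mult_left_mono)
    hence "xx * (exp (- al * v) - 1) * g \<le> xx * (- 0.99 * (al * v)) * g" using g by (intro mult_right_mono) auto
    thus ?thesis by (simp add: algebra_simps)
  next
    case 3
    hence g: "g < 0" using assms(4) by simp
    have "1 + (- al * v) \<le> exp (- al * v)" by (rule exp_ge_add_one_self)
    hence "xx * (- al * v) \<le> xx * (exp (- al * v) - 1)" using assms(1) by (intro mult_left_mono) auto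
    hence "xx * (exp (- al * v) - 1) * g \<le> xx * (- al * v) * g" using g by (intro mult_right_mono_neg) auto
    moreover have "0 \<le> al * (xx * (v * g))" using al_pos assms(1,5) by simp
    ultimately show ?thesis by (simp add: algebra_simps)
  qed
qed

end


lemma sum_swap_AB:
  fixes p z :: "nat \<Rightarrow> real" and A :: "nat \<Rightarrow> nat \<Rightarrow> real"
  shows "(\<Sum>j<m. p j * (\<Sum>i<n. A j i * z i)) = (\<Sum>i<n. z i * (\<Sum>j<m. A j i * p j))"
proof -
  have "(\<Sum>j<m. p j * (\<Sum>i<n. A j i * z i)) = (\<Sum>j<m. \<Sum>i<n. z i * (A j i * p j))"
    by (simp add: sum_distrib_left mult_ac)
  also have "\<dots> = (\<Sum>i<n. \<Sum>j<m. z i * (A j i * p j))" by (rule sum.swap)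
  also have "\<dots> = (\<Sum>i<n. z i * (\<Sum>j<m. A j i * p j))" by (simp add: sum_distrib_left)
  finally show ?thesis .
qed

context pk begin

lemma descent:
  assumes inv: "Inv x"
  shows "ff (stp t x) \<le> ff x - al / 2 * (\<Sum>i<n. x i * (vb t x i * gr x i))"
proof -
  define v where "v i = vb t x i" for i
  define g where "g i = gr x i" for i
  define d where "d i = x i * (exp (- al * v i) - 1)" for i
  define M0 where "M0 = min 1 (\<epsilon> * 2 ^ (t + 1))"
  define p where "p j = pp x j" for j
  define D where "D j = (\<Sum>i<n. A j i * d i)" for j
  define R where "R j = (\<Sum>i<n. A j i * (x i * \<bar>v i\<bar>))" for j
  have xpos: "\<And>i. i < n \<Longrightarrow> 0 < x i" using inv unfolding Inv_def by auto
  have M0: "0 \<le> M0" "M0 \<le> 1" unfolding M0_def using eps_pos by auto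
  have ppos: "\<And>j. 0 < p j" unfolding p_def by (rule pp_pos)
  have stp_eq: "\<And>i. stp t x i = x i + d i" unfolding alg_step_def d_def v_def by (simp add: algebra_simps)
  have Ax': "\<And>j. Ax (stp t x) j = Ax x j + D j"
    unfolding matvec_def D_def stp_eq by (simp add: algebra_simps sum.distrib)
  have pp': "\<And>j. pp (stp t x) j = p j * exp (D j / mu)"
  proof -
    fix j
    have "(Ax x j + D j - 1) / mu = (Ax x j - 1) / mu + D j / mu" by (simp add: add_divide_distrib[symmetric])
    thus "pp (stp t x) j = p j * exp (D j / mu)" unfolding pj_def p_def Ax' by (simp add: exp_add)
  qed
  note vp = v_props[of _ t x, folded v_def g_def M0_def]
  have dabs: "\<And>i. i < n \<Longrightarrow> \<bar>d i\<bar> \<le> 1.1 * al * (x i * \<bar>v i\<bar>)"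
    unfolding d_def using d_abs vp(5) xpos less_imp_le by blast
  have Rnn: "\<And>j. j < m \<Longrightarrow> 0 \<le> R j" unfolding R_def using A_nn xpos
    by (intro sum_nonneg mult_nonneg_nonneg) (auto intro: less_imp_le)
  have Rle: "\<And>j. j < m \<Longrightarrow> R j \<le> 2 * M0"
  proof -
    fix j assume j: "j < m"
    have "R j \<le> (\<Sum>i<n. A j i * (x i * M0))" unfolding R_def
    proof (rule sum_mono)
      fix i assume i: "i \<in> {..<n}"
      have "x i * \<bar>v i\<bar> \<le> x i * M0" using vp(1) i xpos[of i] by (intro mult_left_mono) auto
      thus "A j i * (x i * \<bar>v i\<bar>) \<le> A j i * (x i * M0)" by (rule mult_left_mono) (use A_nn j i in auto)
    qed
    also have "\<dots> = M0 * Ax x j" unfolding matvec_def by (simp add: sum_distrib_left mult_ac)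
    also have "\<dots> \<le> M0 * 2" using Inv_Ax[OF inv j] M0 by (intro mult_left_mono) auto
    finally show "R j \<le> 2 * M0" by simp
  qed
  have Dabs: "\<And>j. j < m \<Longrightarrow> \<bar>D j\<bar> \<le> 1.1 * al * R j"
  proof -
    fix j assume j: "j < m"
    have "\<bar>D j\<bar> \<le> (\<Sum>i<n. \<bar>A j i * d i\<bar>)" unfolding D_def by (rule sum_abs)
    also have "\<dots> \<le> (\<Sum>i<n. A j i * (1.1 * al * (x i * \<bar>v i\<bar>)))"
    proof (rule sum_mono)
      fix i assume i: "i \<in> {..<n}"
      have "\<bar>A j i * d i\<bar> = A j i * \<bar>d i\<bar>" using A_nn j i by (simp add: abs_mult)
      also have "\<dots> \<le> A j i * (1.1 * al * (x i * \<bar>v i\<bar>))" using dabs i A_nn j by (intro mult_left_mono) auto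
      finally show "\<bar>A j i * d i\<bar> \<le> A j i * (1.1 * al * (x i * \<bar>v i\<bar>))" .
    qed
    also have "\<dots> = 1.1 * al * R j" unfolding R_def by (simp add: sum_distrib_left mult_ac)
    finally show "\<bar>D j\<bar> \<le> 1.1 * al * R j" .
  qed
  have dabs1: "\<And>j. j < m \<Longrightarrow> \<bar>D j / mu\<bar> \<le> 1.1 * R j / 20"
  proof -
    fix j assume j: "j < m"
    have "\<bar>D j / mu\<bar> = \<bar>D j\<bar> / mu" using mu_pos by simp
    also have "\<dots> \<le> 1.1 * al * R j / mu" using Dabs[OF j] mu_pos by (intro divide_right_mono) auto
    also have "\<dots> = 1.1 * R j / 20" unfolding al_eq using mu_pos by simp
    finally show "\<bar>D j / mu\<bar> \<le> 1.1 * R j / 20" .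
  qed
  have dabs2: "\<And>j. j < m \<Longrightarrow> \<bar>D j / mu\<bar> \<le> 0.11 * M0"
  proof -
    fix j assume j: "j < m"
    have a: "1.1 * R j / 20 \<le> 0.11 * M0" using Rle[OF j] by simp
    show "\<bar>D j / mu\<bar> \<le> 0.11 * M0" by (rule order_trans[OF dabs1[OF j] a])
  qed
  have sq: "\<And>j. j < m \<Longrightarrow> mu * (D j / mu)^2 \<le> 0.242 * al * (\<Sum>i<n. A j i * (x i * (v i)^2))"
  proof -
    fix j assume j: "j < m"
    have "mu * (D j / mu)^2 = mu * \<bar>D j / mu\<bar> * \<bar>D j / mu\<bar>" by (simp add: power2_eq_square abs_mult_self)
    also have "\<dots> \<le> (1.1 * al * R j) * (0.11 * M0)"
    proof (rule mult_mono)
      show "mu * \<bar>D j / mu\<bar> \<le> 1.1 * al * R j" using Dabs[OF j] mu_pos by (simp add: abs_divide)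
    qed (use dabs2[OF j] Rnn[OF j] al_pos in auto)
    also have "\<dots> = 0.121 * al * (R j * M0)" by simp
    also have "\<dots> \<le> 0.121 * al * (2 * (\<Sum>i<n. A j i * (x i * (v i)^2)))"
    proof (rule mult_left_mono)
      have "R j * M0 = (\<Sum>i<n. A j i * x i * (\<bar>v i\<bar> * M0))" unfolding R_def sum_distrib_right by (rule sum.cong) (simp_all add: mult_ac)
      also have "\<dots> \<le> (\<Sum>i<n. A j i * x i * (2 * (v i)^2))"
        using vp(2) A_nn j xpos by (intro sum_mono mult_left_mono mult_nonneg_nonneg) (auto intro: less_imp_le)
      also have "\<dots> = 2 * (\<Sum>i<n. A j i * (x i * (v i)^2))" by (simp add: sum_distrib_left mult_ac)
      finally show "R j * M0 \<le> 2 * (\<Sum>i<n. A j i * (x i * (v i)^2))" .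
    qed (use al_pos in simp)
    also have "\<dots> = 0.242 * al * (\<Sum>i<n. A j i * (x i * (v i)^2))" by simp
    finally show "mu * (D j / mu)^2 \<le> 0.242 * al * (\<Sum>i<n. A j i * (x i * (v i)^2))" .
  qed
  have termj: "\<And>j. j < m \<Longrightarrow> mu * (pp (stp t x) j - p j) \<le> p j * D j + p j * (0.242 * al * (\<Sum>i<n. A j i * (x i * (v i)^2)))"
  proof -
    fix j assume j: "j < m"
    have "0.11 * M0 \<le> 1" using M0 by simp
    hence d1: "\<bar>D j / mu\<bar> \<le> 1" by (rule order_trans[OF dabs2[OF j]])
    have "exp (D j / mu) - 1 \<le> D j / mu + (D j / mu)^2" using exp_quad_upper[OF d1] by simp
    hence "mu * p j * (exp (D j / mu) - 1) \<le> mu * p j * (D j / mu + (D j / mu)^2)"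
      using mu_pos ppos[of j] by (intro mult_left_mono) auto
    also have "\<dots> = p j * D j + p j * (mu * (D j / mu)^2)" using mu_pos by (simp add: algebra_simps)
    also have "\<dots> \<le> p j * D j + p j * (0.242 * al * (\<Sum>i<n. A j i * (x i * (v i)^2)))"
      using sq[OF j] ppos[of j] by (intro add_left_mono mult_left_mono) auto
    finally show "mu * (pp (stp t x) j - p j) \<le> p j * D j + p j * (0.242 * al * (\<Sum>i<n. A j i * (x i * (v i)^2)))"
      unfolding pp' by (simp add: algebra_simps)
  qed
  have "ff (stp t x) - ff x = - (\<Sum>i<n. d i) + (\<Sum>j<m. mu * (pp (stp t x) j - p j))"
    unfolding ff_eq stp_eq p_def by (simp add: sum.distrib sum_subtractf sum_distrib_left algebra_simps)
  also have "\<dots> \<le> - (\<Sum>i<n. d i) + (\<Sum>j<m. p j * D j + p j * (0.242 * al * (\<Sum>i<n. A j i * (x i * (v i)^2))))"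
    using termj by (intro add_left_mono sum_mono) auto
  also have "\<dots> = - (\<Sum>i<n. d i) + (\<Sum>i<n. d i * (1 + g i)) + 0.242 * al * (\<Sum>i<n. x i * (v i)^2 * (1 + g i))"
  proof -
    have "(\<Sum>j<m. p j * D j) = (\<Sum>i<n. d i * (\<Sum>j<m. A j i * p j))"
      unfolding D_def by (rule sum_swap_AB)
    also have "\<dots> = (\<Sum>i<n. d i * (1 + g i))" unfolding p_def g_def using sum_Ap by simp
    finally have a: "(\<Sum>j<m. p j * D j) = (\<Sum>i<n. d i * (1 + g i))" .
    have "(\<Sum>j<m. p j * (0.242 * al * (\<Sum>i<n. A j i * (x i * (v i)^2))))
        = (\<Sum>j<m. 0.242 * al * (p j * (\<Sum>i<n. A j i * (x i * (v i)^2))))"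
      by (rule sum.cong) (simp_all only: mult_ac)
    also have "\<dots> = 0.242 * al * (\<Sum>j<m. p j * (\<Sum>i<n. A j i * (x i * (v i)^2)))"
      by (rule sum_distrib_left[symmetric])
    also have "(\<Sum>j<m. p j * (\<Sum>i<n. A j i * (x i * (v i)^2))) = (\<Sum>i<n. (x i * (v i)^2) * (\<Sum>j<m. A j i * p j))"
      by (rule sum_swap_AB)
    also have "\<dots> = (\<Sum>i<n. x i * (v i)^2 * (1 + g i))" unfolding p_def g_def using sum_Ap by simp
    finally have b: "(\<Sum>j<m. p j * (0.242 * al * (\<Sum>i<n. A j i * (x i * (v i)^2)))) = 0.242 * al * (\<Sum>i<n. x i * (v i)^2 * (1 + g i))" .
    show ?thesis unfolding sum.distrib a b by simp
  qed
  also have "\<dots> = (\<Sum>i<n. d i * g i + 0.242 * al * (x i * ((v i)^2 * (1 + g i))))"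
  proof -
    have e1: "(\<Sum>i<n. d i * (1 + g i)) = (\<Sum>i<n. d i) + (\<Sum>i<n. d i * g i)"
      by (simp add: distrib_left sum.distrib)
    have e2: "0.242 * al * (\<Sum>i<n. x i * (v i)^2 * (1 + g i)) = (\<Sum>i<n. 0.242 * al * (x i * ((v i)^2 * (1 + g i))))"
      unfolding sum_distrib_left by (rule sum.cong) (simp_all only: mult_ac)
    show ?thesis unfolding e1 e2 sum.distrib by simp
  qed
  also have "\<dots> \<le> (\<Sum>i<n. - (al / 2) * (x i * (v i * g i)))"
  proof (rule sum_mono)
    fix i assume i: "i \<in> {..<n}"
    have xi0: "0 \<le> x i" using xpos i by (simp add: less_imp_le)
    have a: "d i * g i \<le> - 0.99 * al * (x i * (v i * g i))"
      unfolding d_def using dg_bound[OF xi0] vp(3,5,6,7) i by (simp add: mult.assoc)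
    have "x i * ((v i)^2 * (1 + g i)) \<le> x i * (2 * (v i * g i))" using vp(4) i xi0 by (intro mult_left_mono) auto
    hence b: "0.242 * al * (x i * ((v i)^2 * (1 + g i))) \<le> 0.242 * al * (x i * (2 * (v i * g i)))"
      by (rule mult_left_mono) (use al_pos in auto)
    have c: "0 \<le> al * (x i * (v i * g i))" using al_pos xi0 vp(3) i by simp
    have a': "d i * g i \<le> - (99/100) * (al * (x i * (v i * g i)))" using a by simp
    have b': "0.242 * al * (x i * ((v i)^2 * (1 + g i))) \<le> (484/1000) * (al * (x i * (v i * g i)))"
      using b by simp
    have "d i * g i + 0.242 * al * (x i * ((v i)^2 * (1 + g i))) \<le> - (1/2) * (al * (x i * (v i * g i)))"
      using a' b' c by linarith
    thus "d i * g i + 0.242 * al * (x i * ((v i)^2 * (1 + g i))) \<le> - (al / 2) * (x i * (v i * g i))"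
      by simp
  qed
  also have "\<dots> = - (al / 2) * (\<Sum>i<n. x i * (vb t x i * gr x i))"
    unfolding v_def g_def by (simp add: sum_distrib_left)
  finally show ?thesis by simp
qed

end

context pk begin

lemma stp_pos: "Inv x \<Longrightarrow> i < n \<Longrightarrow> 0 < stp t x i"
  unfolding alg_step_def Inv_def by auto

lemma sum_xvg_nn: assumes "Inv x" shows "0 \<le> (\<Sum>i<n. x i * (vb t x i * gr x i))"
proof (rule sum_nonneg)
  fix i assume i: "i \<in> {..<n}"
  show "0 \<le> x i * (vb t x i * gr x i)"
    by (rule mult_nonneg_nonneg) (use assms i v_props(3) in \<open>auto simp: Inv_def intro: less_imp_le\<close>)
qed

lemma Inv_step: assumes inv: "Inv x" shows "Inv (stp t x)"
proof -
  have xpos: "\<And>i. i < n \<Longrightarrow> 0 < x i" using inv unfolding Inv_def by auto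
  have cb: "cc i * stp t x i \<le> 2" if i: "i < n" for i
  proof (cases "cc i * x i \<ge> 3/2")
    case True
    obtain j where j: "j < m" "A j i = cc i" using c_att[OF i] by auto
    have "cc i * x i \<le> Ax x j" using Ax_ge_term[of x j i] xpos j i by (auto intro: less_imp_le)
    hence ax: "Ax x j \<ge> 3/2" using True by simp
    have "1 / (2 * mu) \<le> (Ax x j - 1) / mu" using ax mu_pos by (simp add: field_simps)
    hence "exp (1 / (2 * mu)) \<le> pp x j" unfolding pj_def by simp
    moreover have "1 + 1 / (2 * mu) \<le> exp (1 / (2 * mu))" by (rule exp_ge_add_one_self)
    moreover have "1 / (2 * mu) \<ge> 2" using mu_le mu_pos by (simp add: field_simps)
    ultimately have p3: "pp x j \<ge> 3" by linarith
    have "A j i * pp x j \<le> (\<Sum>j<m. A j i * pp x j)"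
      using A_nn i pp_pos j by (intro member_le_sum mult_nonneg_nonneg) (auto intro: less_imp_le)
    moreover have "cc i * 3 \<le> A j i * pp x j" unfolding j(2) by (rule mult_left_mono) (use p3 c_ge1[OF i] in auto)
    ultimately have "gr x i \<ge> -1 + cc i * 3" unfolding grad_f_def by simp
    hence g2: "gr x i > 1" using c_ge1[OF i] by simp
    hence "xi x i = 1" unfolding xi_trunc_def using eps_le by simp
    hence "vb t x i = 0 \<or> vb t x i = 1" unfolding xi_bucket_def by simp
    hence "exp (- al * vb t x i) \<le> 1" using al_pos by auto
    hence "stp t x i \<le> x i" unfolding alg_step_def using xpos[OF i] by (simp add: mult_le_cancel_left1)
    hence "cc i * stp t x i \<le> cc i * x i" using c_ge1[OF i] by (intro mult_left_mono) auto
    thus ?thesis using inv i unfolding Inv_def by auto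
  next
    case False
    have "\<bar>vb t x i\<bar> \<le> 1" by (rule v_props(5)[OF i])
    hence "- vb t x i \<le> 1" by linarith
    hence "al * (- vb t x i) \<le> al * 1" using al_pos by (intro mult_left_mono) auto
    hence "- al * vb t x i \<le> al" by simp
    hence "exp (- al * vb t x i) \<le> 1.1" using exp_al by (meson exp_le_cancel_iff order_trans)
    hence "cc i * x i * exp (- al * vb t x i) \<le> cc i * x i * 1.1"
      using xpos[OF i] c_ge1[OF i] by (intro mult_left_mono) auto
    thus ?thesis using False unfolding alg_step_def by (simp add: mult.assoc)
  qed
  have "0 \<le> al / 2 * (\<Sum>i<n. x i * (vb t x i * gr x i))"
    by (rule mult_nonneg_nonneg) (use sum_xvg_nn[OF inv, of t] al_pos in auto)
  hence "ff (stp t x) \<le> ff x" using descent[OF inv, of t] by linarith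
  thus ?thesis using inv stp_pos[OF inv] cb unfolding Inv_def by auto
qed

lemma Inv_iter: "Inv (alg_iter m n A \<epsilon> ts k)"
  by (induction k) (auto simp: Inv_x0 Inv_step)

end

lemma mu_alg: fixes mu p D :: real assumes "0 < mu" shows "mu * (p * (1 + D / mu)) = mu * p + p * D"
  using assms by (simp add: field_simps)

context pk begin

lemma convex: "ff u \<ge> ff x + (\<Sum>i<n. (u i - x i) * gr x i)"
proof -
  have pj: "mu * pp u j \<ge> mu * pp x j + pp x j * (Ax u j - Ax x j)" for j
  proof -
    have "(Ax u j - 1) / mu = (Ax x j - 1) / mu + (Ax u j - Ax x j) / mu"
      by (simp add: add_divide_distrib[symmetric])
    hence "pp u j = pp x j * exp ((Ax u j - Ax x j) / mu)" unfolding pj_def by (simp add: exp_add)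
    moreover have "1 + (Ax u j - Ax x j) / mu \<le> exp ((Ax u j - Ax x j) / mu)" by (rule exp_ge_add_one_self)
    ultimately have "pp u j \<ge> pp x j * (1 + (Ax u j - Ax x j) / mu)"
      using pp_pos[of x j] by (simp add: mult_left_mono)
    hence "mu * pp u j \<ge> mu * (pp x j * (1 + (Ax u j - Ax x j) / mu))" using mu_pos by (simp add: mult_left_mono)
    also have "mu * (pp x j * (1 + (Ax u j - Ax x j) / mu)) = mu * pp x j + pp x j * (Ax u j - Ax x j)"
      using mu_pos by (rule mu_alg)
    finally show ?thesis .
  qed
  have "(\<Sum>j<m. pp x j * (Ax u j - Ax x j)) = (\<Sum>j<m. pp x j * (\<Sum>i<n. A j i * (u i - x i)))"
    unfolding matvec_def by (simp add: sum_subtractf algebra_simps)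
  also have "\<dots> = (\<Sum>i<n. (u i - x i) * (\<Sum>j<m. A j i * pp x j))" by (rule sum_swap_AB)
  also have "\<dots> = (\<Sum>i<n. (u i - x i) * (1 + gr x i))" using sum_Ap by simp
  finally have sw: "(\<Sum>j<m. pp x j * (Ax u j - Ax x j)) = (\<Sum>i<n. (u i - x i) * (1 + gr x i))" .
  have "mu * (\<Sum>j<m. pp u j) \<ge> mu * (\<Sum>j<m. pp x j) + (\<Sum>j<m. pp x j * (Ax u j - Ax x j))"
    using pj by (simp add: sum_distrib_left sum.distrib[symmetric] sum_mono)
  moreover have "(\<Sum>i<n. (u i - x i) * (1 + gr x i)) = (\<Sum>i<n. u i) - (\<Sum>i<n. x i) + (\<Sum>i<n. (u i - x i) * gr x i)"
    by (simp add: algebra_simps sum.distrib sum_subtractf)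
  ultimately show ?thesis unfolding ff_eq sw by linarith
qed

definition Phi :: "(nat \<Rightarrow> real) \<Rightarrow> (nat \<Rightarrow> real) \<Rightarrow> real" where
  "Phi u x = (\<Sum>i<n. x i - u i * ln (x i))"

lemma ln_stp: assumes "Inv x" "i < n" shows "ln (stp t x i) = ln (x i) - al * vb t x i"
proof -
  have "0 < x i" using assms unfolding Inv_def by auto
  thus ?thesis unfolding alg_step_def by (simp add: ln_mult)
qed

lemma stp_diff: assumes "Inv x" "i < n"
  shows "stp t x i - x i \<le> x i * (- al * vb t x i + al^2 * (vb t x i)^2)"
proof -
  have v1: "\<bar>vb t x i\<bar> \<le> 1" by (rule v_props(5)[OF assms(2)])
  have "\<bar>- al * vb t x i\<bar> \<le> al * 1" using v1 al_pos by (simp add: abs_mult mult_left_mono)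
  hence "\<bar>- al * vb t x i\<bar> \<le> 1" using al_le by simp
  hence "exp (- al * vb t x i) - 1 \<le> - al * vb t x i + (- al * vb t x i)^2" using exp_quad_upper by fastforce
  hence "x i * (exp (- al * vb t x i) - 1) \<le> x i * (- al * vb t x i + (- al * vb t x i)^2)"
    using assms unfolding Inv_def by (intro mult_left_mono) auto
  thus ?thesis unfolding alg_step_def by (simp add: algebra_simps power2_eq_square)
qed

lemma phi_step: assumes "Inv x"
  shows "Phi u (stp t x) - Phi u x \<le> (\<Sum>i<n. x i * (- al * vb t x i + al^2 * (vb t x i)^2) + al * u i * vb t x i)"
proof -
  have "Phi u (stp t x) - Phi u x = (\<Sum>i<n. (stp t x i - x i) + al * u i * vb t x i)"
    unfolding Phi_def sum_subtractf[symmetric]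
  proof (rule sum.cong)
    fix i assume "i \<in> {..<n}"
    hence l: "ln (stp t x i) = ln (x i) - al * vb t x i" using ln_stp[OF assms] by simp
    show "stp t x i - u i * ln (stp t x i) - (x i - u i * ln (x i)) = stp t x i - x i + al * u i * vb t x i"
      unfolding l by (simp add: algebra_simps)
  qed simp
  also have "\<dots> \<le> (\<Sum>i<n. x i * (- al * vb t x i + al^2 * (vb t x i)^2) + al * u i * vb t x i)"
    using stp_diff[OF assms] by (intro sum_mono) auto
  finally show ?thesis .
qed

end

context pk begin

lemma star:
  assumes inv: "Inv x" and u0: "\<And>i. i < n \<Longrightarrow> 0 \<le> u i"
  shows "(\<Sum>t<w. Phi u (stp t x) + 2 * (1 + al) * ff (stp t x))
    \<le> real w * (Phi u x + 2 * (1 + al) * ff x) + al * (ff u - ff x) + al * \<epsilon> * ((\<Sum>i<n. x i) + (\<Sum>i<n. u i))"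
proof -
  define F where "F i z = x i * (- al * z + al^2 * z^2) + al * u i * z" for i z
  define Dx where "Dx = (\<Sum>i<n. x i * (xi x i * gr x i))"
  define X where "X = (\<Sum>i<n. x i)"
  define U where "U = (\<Sum>i<n. u i)"
  define C where "C = 2 * (1 + al)"
  have xpos: "\<And>i. i < n \<Longrightarrow> 0 < x i" using inv unfolding Inv_def by auto
  have xiok: "\<And>i. i < n \<Longrightarrow> xi x i = 0 \<or> (\<epsilon> < \<bar>xi x i\<bar> \<and> \<bar>xi x i\<bar> \<le> 1)"
    using xi_props(2)[OF eps_pos eps_le gr_ge] by blast
  have ew: "1 \<le> \<epsilon> * 2 ^ w" by (rule w_props(2))
  have hA: "(\<Sum>t<w. Phi u (stp t x)) - real w * Phi u x \<le> (\<Sum>i<n. F i (xi x i))"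
  proof -
    have "(\<Sum>t<w. Phi u (stp t x)) - real w * Phi u x = (\<Sum>t<w. Phi u (stp t x) - Phi u x)"
      by (simp add: sum_subtractf)
    also have "\<dots> \<le> (\<Sum>t<w. \<Sum>i<n. F i (vb t x i))"
      unfolding F_def by (rule sum_mono) (rule phi_step[OF inv])
    also have "\<dots> = (\<Sum>i<n. \<Sum>t<w. F i (vb t x i))" by (rule sum.swap)
    also have "\<dots> = (\<Sum>i<n. F i (xi x i))"
    proof (rule sum.cong)
      fix i assume "i \<in> {..<n}"
      thus "(\<Sum>t<w. F i (vb t x i)) = F i (xi x i)"
        by (intro bucket_sum[OF _ eps_pos ew]) (auto simp: F_def xiok)
    qed simp
    finally show ?thesis .
  qed
  have hB: "(\<Sum>i<n. F i (xi x i)) \<le> al * (\<Sum>i<n. (u i - x i) * gr x i) + al * \<epsilon> * (X + U) + (al + al^2) * Dx"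
  proof -
    have "(\<Sum>i<n. F i (xi x i)) \<le> (\<Sum>i<n. al * ((u i - x i) * gr x i) + al * \<epsilon> * (x i + u i) + (al + al^2) * (x i * (xi x i * gr x i)))"
    proof (rule sum_mono)
      fix i assume i: "i \<in> {..<n}"
      have g1: "-1 \<le> gr x i" using gr_ge i by simp
      have xi0: "0 \<le> x i" using xpos i by (simp add: less_imp_le)
      have m1: "(u i - x i) * xi x i \<le> (u i - x i) * gr x i + \<epsilon> * (x i + u i) + x i * (xi x i * gr x i)"
        by (rule xi_mirror[OF eps_pos eps_le g1 xi0]) (use u0 i in simp)
      have m2: "x i * (xi x i)^2 \<le> x i * (xi x i * gr x i)"
        using xi_props(4)[OF eps_pos eps_le g1] xi0 by (intro mult_left_mono) auto
      have "F i (xi x i) = al * ((u i - x i) * xi x i) + al^2 * (x i * (xi x i)^2)"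
        unfolding F_def by (simp add: algebra_simps)
      also have "\<dots> \<le> al * ((u i - x i) * gr x i + \<epsilon> * (x i + u i) + x i * (xi x i * gr x i)) + al^2 * (x i * (xi x i * gr x i))"
      proof (rule add_mono)
        show "al * ((u i - x i) * xi x i) \<le> al * ((u i - x i) * gr x i + \<epsilon> * (x i + u i) + x i * (xi x i * gr x i))"
          by (rule mult_left_mono[OF m1]) (use al_pos in simp)
        show "al^2 * (x i * (xi x i)^2) \<le> al^2 * (x i * (xi x i * gr x i))"
          by (rule mult_left_mono[OF m2]) simp
      qed
      also have "\<dots> = al * ((u i - x i) * gr x i) + al * \<epsilon> * (x i + u i) + (al + al^2) * (x i * (xi x i * gr x i))"
        by (simp add: algebra_simps)
      finally show "F i (xi x i) \<le> al * ((u i - x i) * gr x i) + al * \<epsilon> * (x i + u i) + (al + al^2) * (x i * (xi x i * gr x i))" .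
    qed
    also have "\<dots> = al * (\<Sum>i<n. (u i - x i) * gr x i) + al * \<epsilon> * (X + U) + (al + al^2) * Dx"
    proof -
      have e1: "(\<Sum>i<n. al * \<epsilon> * (x i + u i)) = al * \<epsilon> * (X + U)"
        unfolding X_def U_def sum.distrib[symmetric] sum_distrib_left ..
      show ?thesis unfolding sum.distrib e1 Dx_def by (simp add: sum_distrib_left)
    qed
    finally show ?thesis .
  qed
  have cvx: "al * (\<Sum>i<n. (u i - x i) * gr x i) \<le> al * (ff u - ff x)"
    using convex[where u=u and x=x] al_pos by (intro mult_left_mono) auto
  have hD: "(\<Sum>t<w. ff (stp t x)) \<le> real w * ff x - al / 2 * Dx"
  proof -
    have "(\<Sum>t<w. ff (stp t x)) \<le> (\<Sum>t<w. ff x - al / 2 * (\<Sum>i<n. x i * (vb t x i * gr x i)))"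
      by (rule sum_mono) (rule descent[OF inv])
    also have "\<dots> = real w * ff x - al / 2 * (\<Sum>t<w. \<Sum>i<n. x i * (vb t x i * gr x i))"
      by (simp add: sum_subtractf sum_distrib_left)
    also have "(\<Sum>t<w. \<Sum>i<n. x i * (vb t x i * gr x i)) = (\<Sum>i<n. \<Sum>t<w. x i * (vb t x i * gr x i))"
      by (rule sum.swap)
    also have "\<dots> = Dx" unfolding Dx_def
    proof (rule sum.cong)
      fix i assume "i \<in> {..<n}"
      thus "(\<Sum>t<w. x i * (vb t x i * gr x i)) = x i * (xi x i * gr x i)"
        using bucket_sum[of "\<lambda>z. x i * (z * gr x i)", OF _ eps_pos ew] xiok by auto
    qed simp
    finally show ?thesis .
  qed
  have hD': "C * (\<Sum>t<w. ff (stp t x)) \<le> C * (real w * ff x) - (al + al^2) * Dx"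
  proof -
    have "C * (\<Sum>t<w. ff (stp t x)) \<le> C * (real w * ff x - al / 2 * Dx)"
      using hD al_pos unfolding C_def by (intro mult_left_mono) auto
    also have "\<dots> = C * (real w * ff x) - (al + al^2) * Dx" unfolding C_def by (simp add: algebra_simps power2_eq_square)
    finally show ?thesis .
  qed
  have L: "(\<Sum>t<w. Phi u (stp t x) + C * ff (stp t x)) = (\<Sum>t<w. Phi u (stp t x)) + C * (\<Sum>t<w. ff (stp t x))"
    by (simp add: sum.distrib sum_distrib_left)
  have R: "real w * (Phi u x + C * ff x) = real w * Phi u x + C * (real w * ff x)" by (simp add: algebra_simps)
  have "(\<Sum>t<w. Phi u (stp t x) + C * ff (stp t x)) \<le> real w * (Phi u x + C * ff x) + al * (ff u - ff x) + al * \<epsilon> * (X + U)"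
    unfolding L R using hA hB cvx hD' by linarith
  thus ?thesis unfolding C_def X_def U_def .
qed

end

context pk begin

lemma iter_cong: "(\<And>i. i < k \<Longrightarrow> ts i = ts' i) \<Longrightarrow> alg_iter m n A \<epsilon> ts k = alg_iter m n A \<epsilon> ts' k"
  by (induction k) auto

definition Ex :: "nat \<Rightarrow> ((nat \<Rightarrow> real) \<Rightarrow> real) \<Rightarrow> real" where
  "Ex k h = (\<Sum>ts \<in> {..<k} \<rightarrow>\<^sub>E {..<w}. h (alg_iter m n A \<epsilon> ts k)) / real w ^ k"

lemma w_pos: "0 < real w" using w_props(1) by simp

lemma card_PE: "card ({..<(k::nat)} \<rightarrow>\<^sub>E {..<w}) = w ^ k"
  by (simp add: card_PiE)

lemma fin_PE: "finite ({..<(k::nat)} \<rightarrow>\<^sub>E {..<w})"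
  by (rule finite_PiE) auto

lemma Ex_0: "Ex 0 h = h x0"
  unfolding Ex_def by simp

lemma Ex_Suc: "Ex (Suc k) h = Ex k (\<lambda>x. (\<Sum>t<w. h (stp t x)) / real w)"
proof -
  let ?I = "alg_iter m n A \<epsilon>"
  let ?f = "\<lambda>(y, g). g(k := y)"
  let ?P = "{..<k} \<rightarrow>\<^sub>E {..<w}"
  have ins: "{..<Suc k} = insert k {..<k}" by auto
  have PE: "{..<Suc k} \<rightarrow>\<^sub>E {..<w} = ?f ` ({..<w} \<times> ?P)"
    by (simp only: ins PiE_insert_eq)
  have inj: "inj_on ?f ({..<w} \<times> ?P)"
    using inj_combinator[of k "{..<k}" "\<lambda>_. {..<w}"] by simp
  have "(\<Sum>ts \<in> {..<Suc k} \<rightarrow>\<^sub>E {..<w}. h (?I ts (Suc k)))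
      = (\<Sum>z \<in> {..<w} \<times> ?P. h (?I (?f z) (Suc k)))"
    unfolding PE by (rule sum.reindex[OF inj, unfolded comp_def])
  also have "\<dots> = (\<Sum>(y, g) \<in> {..<w} \<times> ?P. h (?I (g(k := y)) (Suc k)))"
    by (rule sum.cong) (simp_all add: split_beta)
  also have "\<dots> = (\<Sum>y<w. \<Sum>g \<in> ?P. h (?I (g(k := y)) (Suc k)))"
    by (rule sum.cartesian_product[symmetric])
  also have "\<dots> = (\<Sum>y<w. \<Sum>g \<in> ?P. h (stp y (?I g k)))"
  proof (rule sum.cong[OF refl], rule sum.cong[OF refl])
    fix y g
    have "?I (g(k := y)) k = ?I g k" by (rule iter_cong) simp
    thus "h (?I (g(k := y)) (Suc k)) = h (stp y (?I g k))" by simp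
  qed
  also have "\<dots> = (\<Sum>g \<in> ?P. \<Sum>y<w. h (stp y (?I g k)))" by (rule sum.swap)
  finally have e: "(\<Sum>ts \<in> {..<Suc k} \<rightarrow>\<^sub>E {..<w}. h (?I ts (Suc k))) = (\<Sum>g \<in> ?P. \<Sum>y<w. h (stp y (?I g k)))" .
  have e2: "(\<Sum>g \<in> ?P. (\<Sum>y<w. h (stp y (?I g k))) / real w)
      = (\<Sum>g \<in> ?P. \<Sum>y<w. h (stp y (?I g k))) / real w"
    by (rule sum_divide_distrib[symmetric])
  show ?thesis unfolding Ex_def e e2 by (simp only: divide_divide_eq_left power_Suc)
qed

lemma Ex_lin: "Ex k (\<lambda>x. h x + c * h' x + b) = Ex k h + c * Ex k h' + b"
proof -
  have wk: "real w ^ k > 0" using w_pos by simp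
  have "(\<Sum>ts \<in> {..<k} \<rightarrow>\<^sub>E {..<w}. h (alg_iter m n A \<epsilon> ts k) + c * h' (alg_iter m n A \<epsilon> ts k) + b)
     = (\<Sum>ts \<in> {..<k} \<rightarrow>\<^sub>E {..<w}. h (alg_iter m n A \<epsilon> ts k)) + c * (\<Sum>ts \<in> {..<k} \<rightarrow>\<^sub>E {..<w}. h' (alg_iter m n A \<epsilon> ts k)) + real w ^ k * b"
    by (simp add: sum.distrib sum_distrib_left card_PE)
  thus ?thesis unfolding Ex_def using wk by (simp add: add_divide_distrib)
qed

lemma Ex_const: "Ex k (\<lambda>x. b) = b"
  using Ex_lin[of k "\<lambda>x. 0" 0 "\<lambda>x. 0" b] unfolding Ex_def by simp

lemma Ex_mono: "(\<And>x. Inv x \<Longrightarrow> h x \<le> h' x) \<Longrightarrow> Ex k h \<le> Ex k h'"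
  unfolding Ex_def using w_pos Inv_iter
  by (intro divide_right_mono sum_mono) auto

lemma ff_step_le: "Inv x \<Longrightarrow> ff (stp t x) \<le> ff x"
proof -
  assume inv: "Inv x"
  have "0 \<le> al / 2 * (\<Sum>i<n. x i * (vb t x i * gr x i))"
    by (rule mult_nonneg_nonneg) (use sum_xvg_nn[OF inv, of t] al_pos in auto)
  thus ?thesis using descent[OF inv, of t] by linarith
qed

lemma Ex_f_dec: "Ex (Suc k) ff \<le> Ex k ff"
proof -
  have "Ex (Suc k) ff = Ex k (\<lambda>x. (\<Sum>t<w. ff (stp t x)) / real w)" by (rule Ex_Suc)
  also have "\<dots> \<le> Ex k ff"
  proof (rule Ex_mono)
    fix x assume inv: "Inv x"
    have "(\<Sum>t<w. ff (stp t x)) \<le> (\<Sum>t<w. ff x)" using ff_step_le[OF inv] by (intro sum_mono) auto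
    thus "(\<Sum>t<w. ff (stp t x)) / real w \<le> ff x" using w_pos by (simp add: divide_le_eq mult.commute)
  qed
  finally show ?thesis .
qed

lemma Ex_f_mono: "k \<le> k' \<Longrightarrow> Ex k' ff \<le> Ex k ff"
proof (induction k' rule: dec_induct)
  case base thus ?case by simp
next
  case (step j) thus ?case using Ex_f_dec[of j] by linarith
qed

end


lemma final_alg:
  fixes K C E S Op e L t0 t fu U :: real
  assumes e: "0 < e" "e \<le> 1/2" and Ke: "K * e \<ge> 10 * ((6/10) + L)" and L: "0 \<le> L"
    and C: "0 < C" "C \<le> (21/10)" and Op: "1 \<le> Op" and S: "0 \<le> S" and U: "U = (1 - e/2) * S"
    and H: "(K + C) * E \<le> 1 + U * L + C * t0 + K * (fu + e * (2 * Op + U))"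
    and fu: "fu \<le> - U + t" and t0: "t0 \<le> t" "0 \<le> t0" and t: "t \<le> (21/100) * e" and K: "0 \<le> K"
  shows "E \<le> - (1 - (19/10) * e) * S + 3 * e * Op"
proof -
  define R where "R = - (1 - (19/10) * e) * S + 3 * e * Op"
  define Q where "Q = 1 + U * L + C * t0 + K * (fu + e * (2 * Op + U))"
  have id: "(K + C) * R - Q = (4/10) * (K * e * S) + (1/2) * (K * e * e * S) - C * S + (19/10) * (C * e * S)
     + K * e * Op + 3 * (C * e * Op) - 1 - U * L - C * t0 - K * t + (K * (- U + t) - K * fu)"
    unfolding R_def Q_def U by (simp add: algebra_simps)
  have a1: "K * fu \<le> K * (- U + t)" by (rule mult_left_mono[OF fu K])
  have a2: "0 \<le> K * e * e * S" using K e S by simp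
  have a3: "0 \<le> C * e * S" using C e S by simp
  have a4: "0 \<le> C * e * Op" using C e Op by simp
  have "K * e * S \<ge> (10 * ((6/10) + L)) * S" using Ke S by (intro mult_right_mono) auto
  moreover have "(10 * ((6/10) + L)) * S = 6 * S + 10 * (S * L)" by (simp add: algebra_simps)
  ultimately have b1: "K * e * S \<ge> 6 * S + 10 * (S * L)" by simp
  have b2: "C * S \<le> (21/10) * S" using C S by (intro mult_right_mono) auto
  have "(1 - e/2) * S \<le> 1 * S" using e S by (intro mult_right_mono) auto
  hence "U \<le> S" using U by simp
  hence b3: "U * L \<le> S * L" using L by (intro mult_right_mono) auto
  have b4: "0 \<le> S * L" using L S by simp
  have c1: "K * t \<le> K * ((21/100) * e)" using t K by (intro mult_left_mono) auto
  have c1': "K * ((21/100) * e) = (21/100) * (K * e)" by simp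
  have "K * e * Op \<ge> K * e * 1" using Op K e by (intro mult_left_mono) auto
  hence c2: "K * e * Op \<ge> K * e" by simp
  have "t0 \<le> (21/100) * (1/2)"
  proof -
    have "(21/100) * e \<le> (21/100) * (1/2)" using e by simp
    thus ?thesis using t0 t by linarith
  qed
  hence c3: "C * t0 \<le> (21/10) * ((21/100) * (1/2))" using C t0 by (intro mult_mono) auto
  have "10 * ((6/10) + L) = 6 + 10 * L" by simp
  hence Kge: "K * e \<ge> 6" using Ke L by linarith
  have "(K + C) * R - Q \<ge> 0"
    unfolding id using a1 a2 a3 a4 b1 b2 b3 b4 c1 c1' c2 c3 Kge S by linarith
  hence "(K + C) * E \<le> (K + C) * R" using H unfolding Q_def by linarith
  moreover have "K + C > 0" using K C by simp
  ultimately show ?thesis unfolding R_def by (simp add: mult_le_cancel_left_pos)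
qed


context pk begin

abbreviation "Op \<equiv> OPT m n A"

lemma feas_le1: assumes "packing_feasible m n A z" "i < n" shows "cc i * z i \<le> 1"
proof -
  obtain j where j: "j < m" "A j i = cc i" using c_att[OF assms(2)] by auto
  have z0: "\<And>i. i < n \<Longrightarrow> 0 \<le> z i" using assms(1) unfolding packing_feasible_def by auto
  have "A j i * z i \<le> Ax z j" by (rule Ax_ge_term[OF z0 j(1) assms(2)])
  also have "\<dots> \<le> 1" using assms(1) j(1) unfolding packing_feasible_def by auto
  finally show ?thesis using j by simp
qed

lemma feas_sum: assumes "packing_feasible m n A z" shows "(\<Sum>i<n. z i) \<le> real n"
proof -
  have "(\<Sum>i<n. z i) \<le> (\<Sum>i<n. 1)"
  proof (rule sum_mono)
    fix i assume i: "i \<in> {..<n}"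
    have "1 * z i \<le> cc i * z i" using c_ge1[of i] i assms unfolding packing_feasible_def
      by (intro mult_right_mono) auto
    thus "z i \<le> 1" using feas_le1[OF assms, of i] i by simp
  qed
  thus ?thesis by simp
qed

lemma feas0: "packing_feasible m n A (\<lambda>i. 0)"
  unfolding packing_feasible_def matvec_def by simp

lemma OPT_bdd: "bdd_above {(\<Sum>i<n. x i) | x. packing_feasible m n A x}"
  unfolding bdd_above_def using feas_sum by blast

lemma OPT_ge: "packing_feasible m n A z \<Longrightarrow> (\<Sum>i<n. z i) \<le> Op"
  unfolding OPT_def by (rule cSup_upper[OF _ OPT_bdd]) blast

lemma OPT_least: "(\<And>z. packing_feasible m n A z \<Longrightarrow> (\<Sum>i<n. z i) \<le> B) \<Longrightarrow> Op \<le> B"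
  unfolding OPT_def by (rule cSup_least) (use feas0 in auto)

lemma OPT_ge1: "1 \<le> Op"
proof -
  obtain i0 where i0: "i0 < n" "cc i0 = 1" using i0_ex by auto
  let ?z = "\<lambda>i. if i = i0 then (1::real) else 0"
  have "packing_feasible m n A ?z"
    unfolding packing_feasible_def
  proof (intro conjI allI impI)
    fix j assume j: "j < m"
    have "matvec n A ?z j = (\<Sum>i<n. if i = i0 then A j i else 0)" unfolding matvec_def
      by (rule sum.cong) auto
    also have "\<dots> = A j i0" using i0 by simp
    finally have "matvec n A ?z j = A j i0" .
    thus "matvec n A ?z j \<le> 1" using A_le_c[OF j i0(1)] i0 by simp
  qed auto
  moreover have "(\<Sum>i<n. ?z i) = 1" using i0 by (simp add: sum.delta)
  ultimately show ?thesis using OPT_ge by fastforce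
qed

lemma Inv_opt: assumes "Inv x" shows "(\<Sum>i<n. x i) \<le> 2 * Op"
proof -
  let ?z = "\<lambda>i. x i / 2"
  have "packing_feasible m n A ?z"
    unfolding packing_feasible_def
  proof (intro conjI allI impI)
    fix j assume j: "j < m"
    have "matvec n A ?z j = Ax x j / 2" unfolding matvec_def by (simp add: sum_divide_distrib)
    thus "matvec n A ?z j \<le> 1" using Inv_Ax[OF assms j] by simp
  next
    fix i assume "i < n" thus "0 \<le> x i / 2" using assms unfolding Inv_def by (auto intro: less_imp_le)
  qed
  hence "(\<Sum>i<n. x i / 2) \<le> Op" by (rule OPT_ge)
  thus ?thesis by (simp add: sum_divide_distrib[symmetric])
qed

lemma Phimin: assumes u0: "\<And>i. i < n \<Longrightarrow> 0 \<le> u i" and x0: "\<And>i. i < n \<Longrightarrow> 0 < x i"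
  shows "(\<Sum>i<n. u i - u i * ln (u i)) \<le> Phi u x"
  unfolding Phi_def
proof (rule sum_mono)
  fix i assume i: "i \<in> {..<n}"
  show "u i - u i * ln (u i) \<le> x i - u i * ln (x i)"
  proof (cases "u i = 0")
    case True thus ?thesis using x0 i by (simp add: less_imp_le)
  next
    case False
    have il: "i < n" using i by simp
    have "0 \<le> u i" by (rule u0[OF il])
    hence up: "0 < u i" using False by simp
    have xp: "0 < x i" using x0 il by simp
    have "ln (x i / u i) \<le> x i / u i - 1" using xp up by (intro ln_le_minus_one) simp
    moreover have "ln (x i / u i) = ln (x i) - ln (u i)" using xp up by (simp add: ln_div)
    ultimately have "ln (x i) - ln (u i) \<le> x i / u i - 1" by simp
    hence "u i * (ln (x i) - ln (u i)) \<le> u i * (x i / u i - 1)" using up by (intro mult_left_mono) auto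
    thus ?thesis using up by (simp add: algebra_simps)
  qed
qed

end

context pk begin

lemma phi0:
  assumes feas: "packing_feasible m n A xs"
  defines "u \<equiv> \<lambda>i. (1 - \<epsilon>/2) * xs i"
  shows "Phi u x0 - (\<Sum>i<n. u i - u i * ln (u i)) \<le> 1 + (\<Sum>i<n. u i) * ln (real n)"
proof -
  have "Phi u x0 - (\<Sum>i<n. u i - u i * ln (u i)) = (\<Sum>i<n. x0 i - u i + u i * (ln (u i) - ln (x0 i)))"
    unfolding Phi_def sum_subtractf[symmetric] by (rule sum.cong) (simp_all add: algebra_simps)
  also have "\<dots> \<le> (\<Sum>i<n. x0 i + u i * ln (real n))"
  proof (rule sum_mono)
    fix i assume i: "i \<in> {..<n}"
    hence il: "i < n" by simp
    have xs0: "0 \<le> xs i" using feas il unfolding packing_feasible_def by auto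
    have e2: "0 < 1 - \<epsilon>/2" using eps_le by simp
    have u0: "0 \<le> u i" unfolding u_def using xs0 e2 by simp
    have x0p: "0 < x0 i" using x0_props(1)[OF il] .
    have "u i * (ln (u i) - ln (x0 i)) \<le> u i * ln (real n)"
    proof (cases "u i = 0")
      case True thus ?thesis by simp
    next
      case False
      hence up: "0 < u i" using u0 by simp
      have c1: "cc i \<ge> 1" using c_ge1[OF il] .
      have "cc i * xs i \<le> 1" by (rule feas_le1[OF feas il])
      hence "xs i \<le> 1 / cc i" using c1 by (simp add: field_simps)
      hence "u i \<le> (1 - \<epsilon>/2) * (1 / cc i)" unfolding u_def using e2 by (intro mult_left_mono) auto
      also have "\<dots> = real n * x0 i" unfolding alg_x0_def using n_pos c1 by (simp add: field_simps)
      finally have "u i \<le> real n * x0 i" .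
      hence "ln (u i) \<le> ln (real n * x0 i)" using up by simp
      also have "\<dots> = ln (real n) + ln (x0 i)" using n_pos x0p by (simp add: ln_mult)
      finally have "ln (u i) - ln (x0 i) \<le> ln (real n)" by simp
      thus ?thesis using up by (intro mult_left_mono) auto
    qed
    thus "x0 i - u i + u i * (ln (u i) - ln (x0 i)) \<le> x0 i + u i * ln (real n)" using u0 by simp
  qed
  also have "\<dots> = (\<Sum>i<n. x0 i) + (\<Sum>i<n. u i) * ln (real n)" by (simp add: sum.distrib sum_distrib_right)
  also have "\<dots> \<le> 1 + (\<Sum>i<n. u i) * ln (real n)" using x0_sum by simp
  finally show ?thesis .
qed

lemma main_bound:
  assumes feas: "packing_feasible m n A xs"
  shows "Ex TT ff \<le> - (1 - (19/10) * \<epsilon>) * (\<Sum>i<n. xs i) + 3 * \<epsilon> * Op"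
proof -
  define u where "u = (\<lambda>i. (1 - \<epsilon>/2) * xs i)"
  define S where "S = (\<Sum>i<n. xs i)"
  define U where "U = (\<Sum>i<n. u i)"
  define C where "C = 2 * (1 + al)"
  define Psi where "Psi = (\<lambda>x. Phi u x + C * ff x)"
  define Bc where "Bc = ff u + \<epsilon> * (2 * Op + U)"
  define Pm where "Pm = (\<Sum>i<n. u i - u i * ln (u i))"
  define K where "K = real TT * al / real w"
  define E where "E = Ex TT ff"
  have e2: "0 < 1 - \<epsilon>/2" using eps_le by simp
  have xs0: "\<And>i. i < n \<Longrightarrow> 0 \<le> xs i" using feas unfolding packing_feasible_def by auto
  have u0: "\<And>i. i < n \<Longrightarrow> 0 \<le> u i" unfolding u_def using xs0 e2 by simp
  have S0: "0 \<le> S" unfolding S_def using xs0 by (intro sum_nonneg) auto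
  have US: "U = (1 - \<epsilon>/2) * S" unfolding U_def S_def u_def by (simp add: sum_distrib_left)
  have uAx: "\<And>j. j < m \<Longrightarrow> Ax u j \<le> 1 - \<epsilon>/2"
  proof -
    fix j assume j: "j < m"
    have "Ax u j = (1 - \<epsilon>/2) * Ax xs j" unfolding matvec_def u_def by (simp add: sum_distrib_left mult_ac)
    also have "\<dots> \<le> (1 - \<epsilon>/2) * 1" using feas j e2 unfolding packing_feasible_def by (intro mult_left_mono) auto
    finally show "Ax u j \<le> 1 - \<epsilon>/2" by simp
  qed
  have fu: "ff u \<le> - U + mu * \<epsilon>" unfolding ff_eq U_def using small_sum_p[OF uAx] by simp
  have wp: "0 < real w" by (rule w_pos)
  have alw: "0 \<le> al / real w" using al_pos wp by simp
  have stepb: "(\<Sum>t<w. Psi (stp t x)) / real w \<le> Psi x + (- (al / real w)) * ff x + (al / real w) * Bc"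
    if inv: "Inv x" for x
  proof -
    have st: "(\<Sum>t<w. Psi (stp t x)) \<le> real w * Psi x + al * (ff u - ff x) + al * \<epsilon> * ((\<Sum>i<n. x i) + U)"
      unfolding Psi_def C_def U_def by (rule star[OF inv u0])
    have "al * \<epsilon> * ((\<Sum>i<n. x i) + U) \<le> al * \<epsilon> * (2 * Op + U)"
      using Inv_opt[OF inv] al_pos eps_pos by (intro mult_left_mono) auto
    hence "(\<Sum>t<w. Psi (stp t x)) \<le> real w * Psi x + al * (ff u - ff x) + al * \<epsilon> * (2 * Op + U)" using st by linarith
    also have "\<dots> = real w * (Psi x + (- (al / real w)) * ff x + (al / real w) * Bc)"
      unfolding Bc_def using wp by (simp add: algebra_simps)
    finally show ?thesis using wp by (simp add: pos_divide_le_eq mult.commute)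
  qed
  have rec: "Ex (Suc k) Psi \<le> Ex k Psi + (- (al / real w)) * Ex k ff + (al / real w) * Bc" for k
  proof -
    have "Ex (Suc k) Psi = Ex k (\<lambda>x. (\<Sum>t<w. Psi (stp t x)) / real w)" by (rule Ex_Suc)
    also have "\<dots> \<le> Ex k (\<lambda>x. Psi x + (- (al / real w)) * ff x + (al / real w) * Bc)"
      by (rule Ex_mono) (rule stepb)
    also have "\<dots> = Ex k Psi + (- (al / real w)) * Ex k ff + (al / real w) * Bc" by (rule Ex_lin)
    finally show ?thesis .
  qed
  have ind: "Ex k Psi + (al / real w) * (\<Sum>k'<k. Ex k' ff) \<le> Psi x0 + real k * ((al / real w) * Bc)" for k
  proof (induction k)
    case 0 show ?case using Ex_0 by simp
  next
    case (Suc k)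
    have "Ex (Suc k) Psi + (al / real w) * (\<Sum>k'<Suc k. Ex k' ff)
        = Ex (Suc k) Psi + (al / real w) * Ex k ff + (al / real w) * (\<Sum>k'<k. Ex k' ff)"
      by (simp add: algebra_simps)
    also have "\<dots> \<le> Ex k Psi + (al / real w) * (\<Sum>k'<k. Ex k' ff) + (al / real w) * Bc"
      using rec[of k] by simp
    also have "\<dots> \<le> Psi x0 + real k * ((al / real w) * Bc) + (al / real w) * Bc" using Suc.IH by simp
    also have "\<dots> = Psi x0 + real (Suc k) * ((al / real w) * Bc)" using wp by (simp add: field_simps)
    finally show ?case .
  qed
  have sumE: "real TT * E \<le> (\<Sum>k'<TT. Ex k' ff)"
  proof -
    have "(\<Sum>k'<TT. E) \<le> (\<Sum>k'<TT. Ex k' ff)" unfolding E_def by (intro sum_mono Ex_f_mono) auto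
    thus ?thesis by simp
  qed
  have EPsi: "Ex TT Psi = Ex TT (Phi u) + C * E"
    using Ex_lin[of TT "Phi u" C ff 0] unfolding Psi_def E_def by simp
  have EPhi: "Pm \<le> Ex TT (Phi u)"
  proof -
    have "Ex TT (\<lambda>x. Pm) \<le> Ex TT (Phi u)"
      by (rule Ex_mono) (unfold Pm_def, rule Phimin[OF u0], auto simp: Inv_def)
    thus ?thesis using Ex_const by simp
  qed
  have "Pm + C * E + (al / real w) * (real TT * E) \<le> Psi x0 + real TT * ((al / real w) * Bc)"
  proof -
    have "(al / real w) * (real TT * E) \<le> (al / real w) * (\<Sum>k'<TT. Ex k' ff)"
      using sumE alw by (intro mult_left_mono) auto
    thus ?thesis using ind[of TT] EPsi EPhi by linarith
  qed
  moreover have "(al / real w) * (real TT * E) = K * E" unfolding K_def by simp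
  moreover have "real TT * ((al / real w) * Bc) = K * Bc" unfolding K_def by simp
  ultimately have H0: "(K + C) * E \<le> Phi u x0 - Pm + C * ff x0 + K * Bc"
    unfolding Psi_def by (simp add: algebra_simps)
  have ph: "Phi u x0 - Pm \<le> 1 + U * ln (real n)" unfolding Pm_def U_def u_def by (rule phi0[OF feas])
  have C0: "0 < C" "C \<le> 21/10" unfolding C_def using al_pos al_le by auto
  have cf: "C * ff x0 \<le> C * (mu * \<epsilon>)" using x0_f C0 by (intro mult_left_mono) auto
  have H: "(K + C) * E \<le> 1 + U * ln (real n) + C * (mu * \<epsilon>) + K * (ff u + \<epsilon> * (2 * Op + U))"
    using H0 ph cf unfolding Bc_def by linarith
  have K0: "0 \<le> K" unfolding K_def using al_pos wp by simp
  have Ke: "K * \<epsilon> \<ge> 10 * ((6/10) + ln (real n))"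
  proof -
    have "K \<ge> 10 * ln (2 * real n) / \<epsilon>" unfolding K_def by (rule K_ge)
    hence "K * \<epsilon> \<ge> 10 * ln (2 * real n)" using eps_pos by (simp add: field_simps)
    moreover have "ln (2 * real n) = ln 2 + ln (real n)" using n_pos by (simp add: ln_mult)
    ultimately show ?thesis using ln2_ge by simp
  qed
  have Ln: "0 \<le> ln (real n)" using n_pos by simp
  have mue: "mu * \<epsilon> \<le> (21/100) * \<epsilon>" using mu_le eps_pos by (intro mult_right_mono) auto
  have mue0: "0 \<le> mu * \<epsilon>" using mu_pos eps_pos by simp
  have "E \<le> - (1 - (19/10) * \<epsilon>) * S + 3 * \<epsilon> * Op"
    by (rule final_alg[OF eps_pos eps_le Ke Ln C0 OPT_ge1 S0 US H fu order_refl mue0 mue K0])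
  thus ?thesis unfolding E_def S_def .
qed

end


theorem theorem2p3:
  fixes m n :: nat and A :: "nat \<Rightarrow> nat \<Rightarrow> real" and \<epsilon> :: real
  assumes "0 < n"
    and "\<And>j i. j < m \<Longrightarrow> i < n \<Longrightarrow> 0 \<le> A j i"
    and "\<And>i. i < n \<Longrightarrow> \<exists>j<m. A j i \<noteq> 0"
    and "Min (colnorm m A ` {..<n}) = 1"
    and "0 < \<epsilon>" and "\<epsilon> \<le> 1 / 2"
  shows "expected_f_output m n A \<epsilon> \<le> - (1 - 5 * \<epsilon>) * OPT m n A"
proof -
  interpret pk m n A \<epsilon> by (rule pk.intro) (use assms in auto)
  define E where "E = Ex TT ff"
  have Eq: "expected_f_output m n A \<epsilon> = E" unfolding expected_f_output_def Ex_def E_def Let_def ..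
  have pos: "0 < 1 - (19/10) * \<epsilon>" using assms(6) by simp
  have "Op \<le> (3 * \<epsilon> * Op - E) / (1 - (19/10) * \<epsilon>)"
  proof (rule OPT_least)
    fix z assume f: "packing_feasible m n A z"
    have "E \<le> - (1 - (19/10) * \<epsilon>) * (\<Sum>i<n. z i) + 3 * \<epsilon> * Op" unfolding E_def by (rule main_bound[OF f])
    hence "E \<le> - ((1 - (19/10) * \<epsilon>) * (\<Sum>i<n. z i)) + 3 * \<epsilon> * Op" by (simp only: mult_minus_left)
    hence "(1 - (19/10) * \<epsilon>) * (\<Sum>i<n. z i) \<le> 3 * \<epsilon> * Op - E" by linarith
    thus "(\<Sum>i<n. z i) \<le> (3 * \<epsilon> * Op - E) / (1 - (19/10) * \<epsilon>)" using pos by (simp add: pos_le_divide_eq mult.commute)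
  qed
  hence h: "(1 - (19/10) * \<epsilon>) * Op \<le> 3 * \<epsilon> * Op - E" using pos by (simp add: pos_le_divide_eq mult.commute)
  have h': "Op - (19/10) * (\<epsilon> * Op) \<le> 3 * (\<epsilon> * Op) - E" using h by (simp add: algebra_simps)
  have "0 \<le> \<epsilon> * Op" using assms(5) OPT_ge1 by simp
  hence "E \<le> - Op + 5 * (\<epsilon> * Op)" using h' by linarith
  thus ?thesis unfolding Eq by (simp add: algebra_simps)
qed


end
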